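(* Suppose $(X_i,Y_i)$, $i=1,\dots,n$, are i.i.d. from $P$ and $(X_{n+1},Y_{n+1})\sim Q$ independently, with $\frac{dQ}{dP}(x,y)=w(x)$ for some $w:\mathcal{X}\to(0,\infty)$; $f$, the risk map $\mathcal{L}(f,x,y)\in[0,1]$ and the score $s:\mathcal{X}\to[0,1]$ are fixed. Let $\{\bar w_n(\cdot)\}$ be a sequence of random weight estimates trained independently of $\{(X_i,Y_i)\}_{i=1}^{n+1}$ with $\|\bar w_n-w\|_{L_2(\mathbb{P}_X)}=o_P(1)$ as $n\to\infty$. Let $l(x)=\mathbb{E}[\mathcal{L}(f,X,Y)\mid X=x]$ and assume $F(t)=\mathbb{E}_P[w(X)l(X)\mathbf{1}\{s(X)\le t\}]/\mathbb{E}_P[w(X)]$ is continuous and strictly increasing at $t^*=\sup\{t:F(t)\le\alpha\}$, where $\alpha\in(0,1)$. Set $\gamma=\alpha$ and let $\mathrm{MDR}_n=\mathbb{E}[L_{n+1}\mathbf{1}\{E_{\gamma,n+1}\ge1/\alpha\}]$, where $E_{\gamma,n+1}$ is the weighted e-value below computed with $\bar w_n$ in place of $w$. Then $\limsup_{n\to\infty}\mathrm{MDR}_n\le\alpha$.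
   Context: With $L_i=\mathcal{L}(f,X_i,Y_i)$, weights $w_i=\bar w_n(X_i)$, $\mathcal{M}=\{s(X_i)\}_{i=1}^{n+1}$: $F(t;\ell)=\frac{\sum_{i=1}^nw_iL_i\mathbf{1}\{s(X_i)\le t\}+w_{n+1}\ell\mathbf{1}\{s(X_{n+1})\le t\}}{\sum_{i=1}^{n+1}w_i}$, $t_\gamma(\ell)=\max\{t\in\mathcal{M}:F(t;\ell)\le\gamma\}$ ($\max\emptyset=-\infty$), and $E_{\gamma,n+1}=\inf_{\ell\in[0,1]}\frac{\mathbf{1}\{s(X_{n+1})\le t_\gamma(\ell)\}\sum_{i=1}^{n+1}w_i}{\sum_{i=1}^nw_iL_i\mathbf{1}\{s(X_i)\le t_\gamma(\ell)\}+w_{n+1}\ell\mathbf{1}\{s(X_{n+1})\le t_\gamma(\ell)\}}$ (ratio $0$ if numerator $0$, $+\infty$ if numerator positive and denominator $0$; $E_{\gamma,n+1}=0$ if $\inf_\ell t_\gamma(\ell)=-\infty$). *)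

theory Defs
  imports "HOL-Probability.Probability"
begin

text \<open>Indexing convention: calibration points are indexed 0..n-1 (paper: 1..n),
  the test point is indexed n (paper: n+1).  w i = weight, L i = loss, S i = score.\<close>

definition Fw :: "nat \<Rightarrow> (nat \<Rightarrow> real) \<Rightarrow> (nat \<Rightarrow> real) \<Rightarrow> (nat \<Rightarrow> real) \<Rightarrow> real \<Rightarrow> real \<Rightarrow> real" where
  "Fw n w L S l t =
     ((\<Sum>i<n. w i * L i * (if S i \<le> t then 1 else 0)) + w n * l * (if S n \<le> t then 1 else 0))
     / (\<Sum>i\<le>n. w i)"

definition tgam :: "nat \<Rightarrow> (nat \<Rightarrow> real) \<Rightarrow> (nat \<Rightarrow> real) \<Rightarrow> (nat \<Rightarrow> real) \<Rightarrow> real \<Rightarrow> real \<Rightarrow> ereal" where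
  "tgam n w L S \<gamma> l =
     (let A = {t \<in> S ` {..n}. Fw n w L S l t \<le> \<gamma>} in if A = {} then -\<infinity> else ereal (Max A))"

definition eratio :: "nat \<Rightarrow> (nat \<Rightarrow> real) \<Rightarrow> (nat \<Rightarrow> real) \<Rightarrow> (nat \<Rightarrow> real) \<Rightarrow> real \<Rightarrow> real \<Rightarrow> ereal" where
  "eratio n w L S \<gamma> l =
     (let T = tgam n w L S \<gamma> l;
          num = (if ereal (S n) \<le> T then 1 else 0) * (\<Sum>i\<le>n. w i);
          den = (\<Sum>i<n. w i * L i * (if ereal (S i) \<le> T then 1 else 0))
                + w n * l * (if ereal (S n) \<le> T then 1 else 0)
      in if num = 0 then 0 else if den = 0 then \<infinity> else ereal (num / den))"

definition evalue :: "nat \<Rightarrow> (nat \<Rightarrow> real) \<Rightarrow> (nat \<Rightarrow> real) \<Rightarrow> (nat \<Rightarrow> real) \<Rightarrow> real \<Rightarrow> ereal" where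
  "evalue n w L S \<gamma> =
     (if (INF l\<in>{0..1}. tgam n w L S \<gamma> l) = -\<infinity> then 0
      else (INF l\<in>{0..1}. eratio n w L S \<gamma> l))"

end

theory Submission
  imports Defs
begin

lemma evalue_bound:
  fixes wv L S :: "nat \<Rightarrow> real" and \<alpha> t1 :: real
  assumes wv: "\<And>i. i \<le> n \<Longrightarrow> wv i \<ge> 0" and L: "\<And>i. i \<le> n \<Longrightarrow> L i \<in> {0..1}" and a: "\<alpha> > 0"
     and ev: "evalue n wv L S \<alpha> \<ge> ereal (1/\<alpha>)" and t1: "t1 \<le> S n"
  shows "(\<Sum>i<n. wv i * L i * (if S i \<le> t1 then 1 else 0)) \<le> \<alpha> * (\<Sum>i\<le>n. wv i)"
proof -
  have pos: "ereal (1/\<alpha>) > 0" using a by simp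
  have ninf: "(INF l\<in>{0..1}. tgam n wv L S \<alpha> l) \<noteq> -\<infinity>"
  proof
    assume "(INF l\<in>{0..1}. tgam n wv L S \<alpha> l) = -\<infinity>"
    then have "evalue n wv L S \<alpha> = 0" unfolding evalue_def by simp
    with ev pos show False by simp
  qed
  then have "evalue n wv L S \<alpha> = (INF l\<in>{0..1}. eratio n wv L S \<alpha> l)" unfolding evalue_def by simp
  also have "\<dots> \<le> eratio n wv L S \<alpha> 1" by (rule INF_lower) simp
  finally have e0: "evalue n wv L S \<alpha> \<le> eratio n wv L S \<alpha> 1" .
  have e1: "eratio n wv L S \<alpha> 1 > 0" using e0 ev pos by (meson order_less_le_trans)
  define T where "T = tgam n wv L S \<alpha> 1"
  define A where "A = {t \<in> S ` {..n}. Fw n wv L S 1 t \<le> \<alpha>}"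
  have num: "(if ereal (S n) \<le> T then 1 else 0) * (\<Sum>i\<le>n. wv i) \<noteq> (0::real)"
  proof
    assume "(if ereal (S n) \<le> T then 1 else 0) * (\<Sum>i\<le>n. wv i) = (0::real)"
    then have "eratio n wv L S \<alpha> 1 = 0" unfolding eratio_def T_def Let_def by simp
    with e1 show False by simp
  qed
  then have SnT: "ereal (S n) \<le> T" by (auto split: if_splits)
  have Ane: "A \<noteq> {}"
  proof
    assume "A = {}" then have "T = -\<infinity>" unfolding T_def tgam_def A_def Let_def by simp
    with SnT show False by simp
  qed
  have finA: "finite A" unfolding A_def by simp
  have TA: "T = ereal (Max A)" using Ane unfolding T_def tgam_def A_def Let_def by simp
  define t0 where "t0 = Max A"
  have t0A: "t0 \<in> A" unfolding t0_def using finA Ane by (rule Max_in)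
  have Snt0: "S n \<le> t0" using SnT TA t0_def by simp
  have Ft0: "Fw n wv L S 1 t0 \<le> \<alpha>" using t0A unfolding A_def by simp
  define N where "N = (\<Sum>i<n. wv i * L i * (if S i \<le> t0 then 1 else 0)) + wv n * 1 * (if S n \<le> t0 then 1 else 0)"
  have "(\<Sum>i<n. wv i * L i * (if S i \<le> t1 then 1 else 0)) \<le> (\<Sum>i<n. wv i * L i * (if S i \<le> t0 then 1 else 0))"
  proof (rule sum_mono)
    fix i assume "i \<in> {..<n}"
    then have "wv i * L i \<ge> 0" using wv L by auto
    then show "wv i * L i * (if S i \<le> t1 then 1 else 0) \<le> wv i * L i * (if S i \<le> t0 then 1 else 0)"
      using t1 Snt0 by auto
  qed
  also have "\<dots> \<le> N" unfolding N_def using wv[of n] by simp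
  finally have le1: "(\<Sum>i<n. wv i * L i * (if S i \<le> t1 then 1 else 0)) \<le> N" .
  have Fdef: "Fw n wv L S 1 t0 = N / (\<Sum>i\<le>n. wv i)" unfolding Fw_def N_def by simp
  show ?thesis
  proof (cases "(\<Sum>i\<le>n. wv i) = 0")
    case True
    then have "\<forall>i\<in>{..n}. wv i = 0" using wv by (subst sum_nonneg_eq_0_iff[symmetric]) auto
    then show ?thesis using True by simp
  next
    case False
    then have "(\<Sum>i\<le>n. wv i) > 0" using wv by (metis atMost_iff order_le_less sum_nonneg)
    then have "N \<le> \<alpha> * (\<Sum>i\<le>n. wv i)" using Ft0 Fdef by (simp add: divide_le_eq)
    then show ?thesis using le1 by linarith
  qed
qed

lemma arith_core:
  fixes n c cv \<alpha> \<eta> U D V R Wn S T :: real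
  assumes n: "n > 0" and a: "0 < \<alpha>" "\<alpha> < 1" and eta: "\<eta> > 0" and cv: "cv \<le> 1" and c: "c \<ge> \<alpha> + 6*\<eta>"
    and h1: "U - D \<le> S" and h2: "S \<le> \<alpha>*T" and h3: "T \<le> V + R + D + Wn"
    and b1: "U > n*c - n*\<eta>" and b2: "V < n*cv + n*\<eta>" and b3: "R < n*\<eta>" and b4: "D < n*\<eta>" and b5: "Wn < n*\<eta>"
  shows False
proof -
  have T: "T \<le> n*cv + 4*n*\<eta>" using h3 b2 b3 b4 b5 by linarith
  have "\<alpha>*T \<le> \<alpha>*(n*cv + 4*n*\<eta>)" using T a by (intro mult_left_mono) auto
  also have "\<dots> = n*(\<alpha>*cv) + \<alpha>*(4*n*\<eta>)" by (simp add: algebra_simps)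
  also have "n*(\<alpha>*cv) \<le> n*\<alpha>" using a cv n by (intro mult_left_mono) auto
  also have "\<alpha>*(4*n*\<eta>) \<le> 1*(4*n*\<eta>)" using a n eta by (intro mult_right_mono) auto
  finally have "\<alpha>*T \<le> n*\<alpha> + 4*n*\<eta>" by simp
  then have "n*c - 2*n*\<eta> < n*\<alpha> + 4*n*\<eta>" using h1 h2 b1 b4 by linarith
  then have "n*(c - \<alpha> - 6*\<eta>) < 0" by (simp add: algebra_simps)
  moreover have "n*(c - \<alpha> - 6*\<eta>) \<ge> 0" using n c by simp
  ultimately show False by simp
qed

lemma exp_lim: assumes "(\<eta>::real) > 0" "(K::real) > 0"
  shows "(\<lambda>n. exp (-2*(real n*\<eta>)\<^sup>2/(real n*K\<^sup>2))) \<longlonglongrightarrow> 0"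
proof -
  define c where "c = 2*\<eta>\<^sup>2/K\<^sup>2"
  have c: "c > 0" using assms by (simp add: c_def)
  have "(\<lambda>n. exp (-c) ^ n) \<longlonglongrightarrow> 0" using c by (intro LIMSEQ_power_zero) auto
  moreover have "eventually (\<lambda>n. exp (-c) ^ n = exp (-2*(real n*\<eta>)\<^sup>2/(real n*K\<^sup>2))) sequentially"
    using eventually_gt_at_top[of 0]
  proof eventually_elim
    case (elim n)
    have "exp (-c) ^ n = exp (-c * real n)" by (simp add: exp_of_nat_mult[symmetric] mult.commute)
    also have "-c * real n = -2*(real n*\<eta>)\<^sup>2/(real n*K\<^sup>2)" using elim assms
      by (simp add: c_def power2_eq_square field_simps)
    finally show ?case .
  qed
  ultimately show ?thesis by (rule Lim_transform_eventually)
qed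

lemma arith8: "(F::real) - I \<le> q \<Longrightarrow> q \<le> (F - (a::real))/8 \<Longrightarrow> a < F \<Longrightarrow> a + 6*((F - a)/8) \<le> I"
  by (simp add: field_simps)

locale S63 =
  fixes Mx :: "'x measure" and My :: "'y measure"
    and P Q :: "('x \<times> 'y) measure"
    and w :: "'x \<Rightarrow> real" and s :: "'x \<Rightarrow> real" and Lf :: "'x \<times> 'y \<Rightarrow> real"
    and \<Omega> :: "nat \<Rightarrow> 'o measure" and Wbar :: "nat \<Rightarrow> 'o \<Rightarrow> 'x \<Rightarrow> real"
    and \<alpha> :: real
  assumes P_prob: "prob_space P"
    and P_sets: "sets P = sets (Mx \<Otimes>\<^sub>M My)"
    and w_meas[measurable]: "w \<in> borel_measurable Mx"
    and w_pos: "\<And>x. x \<in> space Mx \<Longrightarrow> w x > 0"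
    and Q_def: "Q = density P (\<lambda>z. ennreal (w (fst z)))"
    and Q_prob: "prob_space Q"
    and Lf_meas: "Lf \<in> borel_measurable (Mx \<Otimes>\<^sub>M My)"
    and Lf_range: "\<And>z. z \<in> space (Mx \<Otimes>\<^sub>M My) \<Longrightarrow> Lf z \<in> {0..1}"
    and s_meas[measurable]: "s \<in> borel_measurable Mx"
    and s_range: "\<And>x. x \<in> space Mx \<Longrightarrow> s x \<in> {0..1}"
    and \<Omega>_prob: "\<And>n. prob_space (\<Omega> n)"
    and Wbar_meas[measurable]: "\<And>n. (\<lambda>(\<omega>, x). Wbar n \<omega> x) \<in> borel_measurable (\<Omega> n \<Otimes>\<^sub>M Mx)"
    and Wbar_nonneg: "\<And>n \<omega> x. \<omega> \<in> space (\<Omega> n) \<Longrightarrow> x \<in> space Mx \<Longrightarrow> Wbar n \<omega> x \<ge> 0"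
    and \<alpha>_range: "0 < \<alpha>" "\<alpha> < 1"
begin

definition "Mf n = (\<lambda>i. if i = n then Q else P)"
abbreviation "PM n \<equiv> PiM {..n} (Mf n)"
abbreviation "MM n \<equiv> \<Omega> n \<Otimes>\<^sub>M PM n"

lemma sets_Q[measurable_cong]: "sets Q = sets P" unfolding Q_def by simp
lemma space_Q: "space Q = space P" unfolding Q_def by simp
lemma space_P: "space P = space (Mx \<Otimes>\<^sub>M My)" using P_sets by (rule sets_eq_imp_space_eq)

lemma fst_meas[measurable]: "fst \<in> measurable P Mx"
  by (subst measurable_cong_sets[OF P_sets refl]) simp
lemma Lf_measP[measurable]: "Lf \<in> borel_measurable P"
  by (subst measurable_cong_sets[OF P_sets refl]) (rule Lf_meas)

lemma sets_Mf[measurable_cong]: "sets (Mf n i) = sets P" by (simp add: Mf_def sets_Q)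
lemma space_Mf: "space (Mf n i) = space P" by (simp add: Mf_def space_Q)
lemma prob_Mf: "prob_space (Mf n i)" by (simp add: Mf_def P_prob Q_prob)

lemma comp_meas[measurable]: "i \<le> n \<Longrightarrow> (\<lambda>Z. Z i) \<in> measurable (PM n) P"
  using measurable_component_singleton[of i "{..n}" "Mf n"]
  by (simp add: measurable_cong_sets[OF refl sets_Mf])

lemma comp_meas2[measurable]: "i \<le> n \<Longrightarrow> (\<lambda>(\<omega>,Z). Z i) \<in> measurable (MM n) P"
  by measurable

lemma Lf_space: "z \<in> space P \<Longrightarrow> Lf z \<in> {0..1}" using Lf_range space_P by auto
lemma fst_space: "z \<in> space P \<Longrightarrow> fst z \<in> space Mx" using space_P by (auto simp: space_pair_measure)

lemma prob_PM: "prob_space (PM n)" by (intro prob_space_PiM prob_Mf)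
lemma prob_MM: "prob_space (MM n)"
proof -
  interpret PMp: prob_space "PM n" by (rule prob_PM)
  interpret Op: prob_space "\<Omega> n" by (rule \<Omega>_prob)
  interpret pair_prob_space "\<Omega> n" "PM n" by unfold_locales
  show ?thesis by (rule prob_space_axioms)
qed

lemma nn_comp:
  assumes i: "i \<le> n" and h[measurable]: "(\<lambda>(\<omega>,z). h \<omega> z) \<in> borel_measurable (\<Omega> n \<Otimes>\<^sub>M P)"
  shows "(\<integral>\<^sup>+(\<omega>,Z). h \<omega> (Z i) \<partial>MM n) = (\<integral>\<^sup>+\<omega>. \<integral>\<^sup>+z. h \<omega> z \<partial>Mf n i \<partial>\<Omega> n)"
proof -
  interpret PMp: prob_space "PM n" by (rule prob_PM)
  have m: "(\<lambda>(\<omega>,Z). h \<omega> (Z i)) \<in> borel_measurable (MM n)" using i by measurable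
  have "(\<integral>\<^sup>+(\<omega>,Z). h \<omega> (Z i) \<partial>MM n) = (\<integral>\<^sup>+\<omega>. \<integral>\<^sup>+Z. h \<omega> (Z i) \<partial>PM n \<partial>\<Omega> n)"
    using PMp.nn_integral_fst[OF m] by simp
  also have "\<dots> = (\<integral>\<^sup>+\<omega>. \<integral>\<^sup>+z. h \<omega> z \<partial>Mf n i \<partial>\<Omega> n)"
  proof (rule nn_integral_cong)
    fix \<omega> assume \<omega>: "\<omega> \<in> space (\<Omega> n)"
    have D: "distr (PM n) (Mf n i) (\<lambda>Z. Z i) = Mf n i"
      using i by (intro distr_PiM_component prob_Mf) auto
    have hm: "h \<omega> \<in> borel_measurable (Mf n i)"
      using \<omega> by (simp add: measurable_cong_sets[OF sets_Mf refl])
    have "(\<integral>\<^sup>+z. h \<omega> z \<partial>Mf n i) = (\<integral>\<^sup>+z. h \<omega> z \<partial>distr (PM n) (Mf n i) (\<lambda>Z. Z i))"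
      by (simp add: D)
    also have "\<dots> = (\<integral>\<^sup>+Z. h \<omega> (Z i) \<partial>PM n)"
      using i hm D by (intro nn_integral_distr) (auto simp: measurable_component_singleton)
    finally show "(\<integral>\<^sup>+Z. h \<omega> (Z i) \<partial>PM n) = (\<integral>\<^sup>+z. h \<omega> z \<partial>Mf n i)" by simp
  qed
  finally show ?thesis .
qed

lemma emeasure_snd_event:
  assumes B: "B \<in> sets (PM n)"
  shows "emeasure (MM n) (space (\<Omega> n) \<times> B) = emeasure (PM n) B"
proof -
  interpret PMp: prob_space "PM n" by (rule prob_PM)
  interpret Op: prob_space "\<Omega> n" by (rule \<Omega>_prob)
  show ?thesis using B by (simp add: PMp.emeasure_pair_measure_Times Op.emeasure_space_1)
qed

lemma hoeff:
  fixes g :: "'x \<times> 'y \<Rightarrow> real"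
  assumes g[measurable]: "g \<in> borel_measurable P" and gr: "\<And>z. z \<in> space P \<Longrightarrow> g z \<in> {0..K}"
    and K: "K > 0" and n: "n > 0" and \<epsilon>: "\<epsilon> \<ge> 0"
  shows "emeasure (PM n) {Z \<in> space (PM n). (\<Sum>i<n. g (Z i)) \<le> real n * (\<integral>z. g z \<partial>P) - \<epsilon>}
           \<le> ennreal (exp (-2*\<epsilon>\<^sup>2/(real n * K\<^sup>2)))" (is ?A)
    and "emeasure (PM n) {Z \<in> space (PM n). (\<Sum>i<n. g (Z i)) \<ge> real n * (\<integral>z. g z \<partial>P) + \<epsilon>}
           \<le> ennreal (exp (-2*\<epsilon>\<^sup>2/(real n * K\<^sup>2)))" (is ?B)
proof -
  interpret PMp: prob_space "PM n" by (rule prob_PM)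
  interpret PP: product_prob_space "Mf n" "{..<n}"
    by (intro product_prob_spaceI prob_Mf)
  have rv: "(\<lambda>Z. Z i) \<in> measurable (PM n) (Mf n i)" if "i \<in> {..<n}" for i
    using that by (intro measurable_component_singleton) auto
  have ind0: "PMp.indep_vars (Mf n) (\<lambda>i Z. Z i) {..<n}"
  proof (subst PMp.indep_vars_iff_distr_eq_PiM')
    show "{..<n} \<noteq> {}" using n by auto
    show "\<And>i. i \<in> {..<n} \<Longrightarrow> (\<lambda>Z. Z i) \<in> measurable (PM n) (Mf n i)" by (rule rv)
    have "distr (PM n) (PiM {..<n} (Mf n)) (\<lambda>x. \<lambda>i\<in>{..<n}. x i) = PiM {..<n} (Mf n)"
      by (rule PP.distr_restrict[symmetric]) auto
    also have "\<dots> = PiM {..<n} (\<lambda>i. distr (PM n) (Mf n i) (\<lambda>x. x i))"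
      by (intro PiM_cong refl distr_PiM_component[symmetric] prob_Mf) auto
    finally show "distr (PM n) (PiM {..<n} (Mf n)) (\<lambda>x. \<lambda>i\<in>{..<n}. x i) = PiM {..<n} (\<lambda>i. distr (PM n) (Mf n i) (\<lambda>x. x i))" .
  qed
  have ind: "PMp.indep_vars (\<lambda>_. borel) (\<lambda>i Z. g (Z i)) {..<n}"
    by (rule PMp.indep_vars_compose2[OF ind0]) (simp add: measurable_cong_sets[OF sets_Mf refl])
  have ex: "PMp.expectation (\<lambda>Z. g (Z i)) = (\<integral>z. g z \<partial>P)" if i: "i < n" for i
  proof -
    have D: "distr (PM n) (Mf n i) (\<lambda>Z. Z i) = Mf n i"
      using i by (intro distr_PiM_component prob_Mf) auto
    have "PMp.expectation (\<lambda>Z. g (Z i)) = integral\<^sup>L (distr (PM n) (Mf n i) (\<lambda>Z. Z i)) g"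
      using i by (intro integral_distr[symmetric]) (auto simp: measurable_cong_sets[OF sets_Mf refl] measurable_component_singleton)
    also have "\<dots> = (\<integral>z. g z \<partial>P)" using D i by (simp add: Mf_def)
    finally show ?thesis .
  qed
  have mu: "(\<Sum>i<n. PMp.expectation (\<lambda>Z. g (Z i))) = real n * (\<integral>z. g z \<partial>P)"
    using ex by simp
  interpret H: Hoeffding_ineq "PM n" "{..<n}" "\<lambda>i Z. g (Z i)" "\<lambda>_. 0" "\<lambda>_. K"
      "\<Sum>i<n. PMp.expectation (\<lambda>Z. g (Z i))"
  proof unfold_locales
    show "finite {..<n}" by simp
    show "PMp.indep_vars (\<lambda>_. borel) (\<lambda>i Z. g (Z i)) {..<n}" by (rule ind)
    fix i assume "i \<in> {..<n}"
    then show "AE x in PM n. g (x i) \<in> {0..K}"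
      by (intro AE_I2 gr) (auto simp: space_PiM space_Mf)
  qed
  have sq: "(\<Sum>i<n. (K - 0)\<^sup>2) = real n * K\<^sup>2" by simp
  have sqp: "(\<Sum>i<n. (K - 0)\<^sup>2) > 0" using n K by simp
  show ?A
    using H.Hoeffding_ineq_le[OF \<epsilon> sqp] unfolding mu sq
    by (simp add: PMp.emeasure_eq_measure)
  show ?B
    using H.Hoeffding_ineq_ge[OF \<epsilon> sqp] unfolding mu sq
    by (simp add: PMp.emeasure_eq_measure)
qed

lemma wfst_pos: "z \<in> space P \<Longrightarrow> w (fst z) > 0" using w_pos fst_space by auto

lemma w_nn1: "(\<integral>\<^sup>+z. ennreal (w (fst z)) \<partial>P) = 1"
proof -
  interpret Qp: prob_space Q by (rule Q_prob)
  have "1 = emeasure Q (space P)" using Qp.emeasure_space_1 space_Q by simp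
  also have "\<dots> = (\<integral>\<^sup>+z. ennreal (w (fst z)) * indicator (space P) z \<partial>P)"
    unfolding Q_def by (intro emeasure_density) auto
  also have "\<dots> = (\<integral>\<^sup>+z. ennreal (w (fst z)) \<partial>P)"
    by (intro nn_integral_cong) simp
  finally show ?thesis by simp
qed

lemma w_int: "integrable P (\<lambda>z. w (fst z))"
  using w_nn1 wfst_pos by (intro integrableI_nonneg) (auto intro!: AE_I2 less_imp_le)

lemma w_int1: "(\<integral>z. w (fst z) \<partial>P) = 1"
proof -
  have "ennreal (\<integral>z. w (fst z) \<partial>P) = 1"
  proof -
    have "(\<integral>\<^sup>+z. ennreal (w (fst z)) \<partial>P) = ennreal (\<integral>z. w (fst z) \<partial>P)"
      using wfst_pos by (intro nn_integral_eq_integral w_int AE_I2) (auto simp: less_imp_le)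
    then show ?thesis using w_nn1 by simp
  qed
  then show ?thesis by simp
qed

definition "qK K = (\<integral>z. w (fst z) * (if K < w (fst z) then 1 else 0) \<partial>P)"

lemma qK_int: "integrable P (\<lambda>z. w (fst z) * (if K < w (fst z) then 1 else 0))"
  by (rule Bochner_Integration.integrable_bound[OF w_int]) (auto intro!: AE_I2 simp: wfst_pos less_imp_le)

lemma qK_nonneg: "qK K \<ge> 0"
  unfolding qK_def using wfst_pos by (intro integral_nonneg_AE AE_I2) (auto simp: less_imp_le)

lemma qK_nn: "(\<integral>\<^sup>+z. ennreal (w (fst z) * (if K < w (fst z) then 1 else 0)) \<partial>P) = ennreal (qK K)"
  unfolding qK_def using wfst_pos by (intro nn_integral_eq_integral qK_int AE_I2) (auto simp: less_imp_le)

lemma qK_small: assumes "\<theta> > 0" shows "\<exists>K>0. qK K \<le> \<theta>"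
proof -
  have lim: "(\<lambda>m. qK (real m)) \<longlonglongrightarrow> (\<integral>z. 0 \<partial>P)"
    unfolding qK_def
  proof (rule integral_dominated_convergence[OF _ _ w_int])
    show "AE z in P. (\<lambda>m. w (fst z) * (if real m < w (fst z) then 1 else 0)) \<longlonglongrightarrow> 0"
    proof (rule AE_I2)
      fix z
      have "eventually (\<lambda>m. w (fst z) * (if real m < w (fst z) then 1 else 0) = 0) sequentially"
        using eventually_ge_at_top[of "nat \<lceil>w (fst z)\<rceil>"]
        by eventually_elim (auto simp: nat_le_iff ceiling_le_iff)
      then show "(\<lambda>m. w (fst z) * (if real m < w (fst z) then 1 else 0)) \<longlonglongrightarrow> 0"
        by (rule tendsto_eventually)
    qed
    show "AE z in P. norm (w (fst z) * (if real m < w (fst z) then 1 else 0)) \<le> w (fst z)" for m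
      using wfst_pos by (intro AE_I2) (auto simp: less_imp_le)
  qed auto
  then have "eventually (\<lambda>m. qK (real m) < \<theta>) sequentially"
    using assms by (intro order_tendstoD) auto
  then obtain m0 where m0: "\<And>m. m \<ge> m0 \<Longrightarrow> qK (real m) < \<theta>" by (auto simp: eventually_sequentially)
  have "qK (real (Suc m0)) < \<theta>" by (rule m0) simp
  then show ?thesis by (intro exI[of _ "real (Suc m0)"]) auto
qed

definition "Fint t = (\<integral>z. w (fst z) * Lf z * (if s (fst z) \<le> t then 1 else 0) \<partial>P)"

lemma Fint_int: "integrable P (\<lambda>z. w (fst z) * Lf z * (if s (fst z) \<le> t then 1 else 0))"
proof (rule Bochner_Integration.integrable_bound[OF w_int])
  show "(\<lambda>z. w (fst z) * Lf z * (if s (fst z) \<le> t then 1 else 0)) \<in> borel_measurable P" by measurable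
  show "AE z in P. norm (w (fst z) * Lf z * (if s (fst z) \<le> t then 1 else 0)) \<le> norm (w (fst z))"
  proof (rule AE_I2)
    fix z assume z: "z \<in> space P"
    have L: "0 \<le> Lf z" "Lf z \<le> 1" using Lf_space[OF z] by auto
    have W: "0 < w (fst z)" using wfst_pos[OF z] .
    have "w (fst z) * Lf z \<le> w (fst z)" using L W by (simp add: mult_left_le)
    then show "norm (w (fst z) * Lf z * (if s (fst z) \<le> t then 1 else 0)) \<le> norm (w (fst z))"
      using L W by (simp add: abs_mult)
  qed
qed

lemma F_eq: "(\<integral>z. w (fst z) * real_cond_exp P (vimage_algebra (space P) fst Mx) Lf z
                * (if s (fst z) \<le> t then 1 else 0) \<partial>P) / (\<integral>z. w (fst z) \<partial>P) = Fint t"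
proof -
  interpret Pp: prob_space P by (rule P_prob)
  let ?F = "vimage_algebra (space P) fst Mx"
  have fm: "fst \<in> space P \<rightarrow> space Mx" using fst_space by auto
  have sub: "subalgebra P ?F"
    unfolding subalgebra_def
  proof
    show "space ?F = space P" by simp
    show "sets ?F \<subseteq> sets P"
      using fm by (auto simp: sets_vimage_algebra2 intro!: measurable_sets[OF fst_meas])
  qed
  interpret fs: finite_measure_subalgebra P ?F
    by unfold_locales (rule sub)
  have fstF: "fst \<in> measurable ?F Mx" using fm by (rule measurable_vimage_algebra1)
  have gm: "(\<lambda>x. w x * (if s x \<le> t then 1 else 0)) \<in> borel_measurable Mx" by measurable
  have fF: "(\<lambda>z. w (fst z) * (if s (fst z) \<le> t then 1 else 0)) \<in> borel_measurable ?F"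
    by (rule measurable_compose[OF fstF gm])
  have int: "integrable P (\<lambda>z. (w (fst z) * (if s (fst z) \<le> t then 1 else 0)) * Lf z)"
    using Fint_int[of t] by (simp add: mult_ac)
  have "(\<integral>z. w (fst z) * real_cond_exp P ?F Lf z * (if s (fst z) \<le> t then 1 else 0) \<partial>P)
      = (\<integral>z. (w (fst z) * (if s (fst z) \<le> t then 1 else 0)) * real_cond_exp P ?F Lf z \<partial>P)"
    by (simp add: mult_ac)
  also have "\<dots> = (\<integral>z. (w (fst z) * (if s (fst z) \<le> t then 1 else 0)) * Lf z \<partial>P)"
    by (rule fs.real_cond_exp_intg(2)[OF int fF Lf_measP])
  also have "\<dots> = Fint t" unfolding Fint_def by (simp add: mult_ac)
  finally show ?thesis using w_int1 by simp
qed

lemma test_int: "(\<integral>\<^sup>+(\<omega>,Z). ennreal (Lf (Z n) * (if s (fst (Z n)) < t then 1 else 0)) \<partial>MM n) \<le> ennreal (Fint t)"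
proof -
  interpret Op: prob_space "\<Omega> n" by (rule \<Omega>_prob)
  have "(\<integral>\<^sup>+(\<omega>,Z). ennreal (Lf (Z n) * (if s (fst (Z n)) < t then 1 else 0)) \<partial>MM n)
     = (\<integral>\<^sup>+\<omega>. \<integral>\<^sup>+z. ennreal (Lf z * (if s (fst z) < t then 1 else 0)) \<partial>Mf n n \<partial>\<Omega> n)"
    by (rule nn_comp[where h="\<lambda>\<omega> z. ennreal (Lf z * (if s (fst z) < t then 1 else 0))"]) auto
  also have "\<dots> = (\<integral>\<^sup>+z. ennreal (Lf z * (if s (fst z) < t then 1 else 0)) \<partial>Q)"
    by (simp add: Mf_def Op.emeasure_space_1)
  also have "\<dots> = (\<integral>\<^sup>+z. ennreal (w (fst z)) * ennreal (Lf z * (if s (fst z) < t then 1 else 0)) \<partial>P)"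
    unfolding Q_def by (intro nn_integral_density) auto
  also have "\<dots> \<le> (\<integral>\<^sup>+z. ennreal (w (fst z) * Lf z * (if s (fst z) \<le> t then 1 else 0)) \<partial>P)"
  proof (intro nn_integral_mono)
    fix z assume z: "z \<in> space P"
    have L: "0 \<le> Lf z" "Lf z \<le> 1" using Lf_space[OF z] by auto
    have W: "0 < w (fst z)" using wfst_pos[OF z] .
    show "ennreal (w (fst z)) * ennreal (Lf z * (if s (fst z) < t then 1 else 0))
        \<le> ennreal (w (fst z) * Lf z * (if s (fst z) \<le> t then 1 else 0))"
      using L W by (cases "s (fst z) < t") (auto simp: ennreal_mult[symmetric] mult_ac)
  qed
  also have "\<dots> = ennreal (Fint t)"
    unfolding Fint_def
  proof (intro nn_integral_eq_integral Fint_int AE_I2)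
    fix z assume z: "z \<in> space P"
    have L: "0 \<le> Lf z" "Lf z \<le> 1" using Lf_space[OF z] by auto
    have W: "0 < w (fst z)" using wfst_pos[OF z] .
    show "0 \<le> w (fst z) * Lf z * (if s (fst z) \<le> t then 1 else 0)" using L W by simp
  qed
  finally show ?thesis .
qed

lemma ennreal_ge1: fixes c S :: real assumes "0 < c" "c \<le> S" shows "1 \<le> ennreal (1/c) * ennreal S"
proof -
  have "ennreal (1/c) * ennreal S = ennreal (1/c * S)" using assms by (subst ennreal_mult) auto
  moreover have "1/c * S \<ge> 1" using assms by (simp add: field_simps)
  ultimately show ?thesis by (metis ennreal_1 ennreal_leI)
qed

lemma emeasure_le_nn:
  assumes "A \<in> sets M" "\<And>x. x \<in> A \<Longrightarrow> 1 \<le> f x"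
  shows "emeasure M A \<le> (\<integral>\<^sup>+x. f x \<partial>M)"
proof -
  have "emeasure M A = (\<integral>\<^sup>+x. indicator A x \<partial>M)" using assms(1) by simp
  also have "\<dots> \<le> (\<integral>\<^sup>+x. f x \<partial>M)"
    using assms(2) by (intro nn_integral_mono) (auto simp: indicator_def)
  finally show ?thesis .
qed

lemma sp_MM: assumes "x \<in> space (MM n)" "i \<le> n" shows "snd x i \<in> space P" "fst x \<in> space (\<Omega> n)"
  using assms by (auto simp: space_pair_measure space_PiM space_Mf PiE_iff)

lemma nn_comp':
  assumes i: "i \<le> n" and h[measurable]: "(\<lambda>(\<omega>,z). h \<omega> z) \<in> borel_measurable (\<Omega> n \<Otimes>\<^sub>M P)"
  shows "(\<integral>\<^sup>+x. h (fst x) (snd x i) \<partial>MM n) = (\<integral>\<^sup>+\<omega>. \<integral>\<^sup>+z. h \<omega> z \<partial>Mf n i \<partial>\<Omega> n)"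
proof -
  have "(\<lambda>x. h (fst x) (snd x i)) = (\<lambda>(\<omega>,Z). h \<omega> (Z i))" by auto
  then show ?thesis using nn_comp[OF assms] by simp
qed

lemma markov_R:
  assumes n: "n > 0" and eta: "\<eta> > 0"
  shows "emeasure (MM n) {x \<in> space (MM n). real n * \<eta> \<le> (\<Sum>i<n. w (fst (snd x i)) * (if K < w (fst (snd x i)) then 1 else 0))}
          \<le> ennreal (qK K / \<eta>)"
proof -
  interpret Op: prob_space "\<Omega> n" by (rule \<Omega>_prob)
  define r where "r = (\<lambda>z::'x\<times>'y. w (fst z) * (if K < w (fst z) then 1 else (0::real)))"
  have rm[measurable]: "r \<in> borel_measurable P" unfolding r_def by measurable
  have rpos: "z \<in> space P \<Longrightarrow> r z \<ge> 0" for z using wfst_pos[of z] by (simp add: r_def)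
  have "emeasure (MM n) {x \<in> space (MM n). real n * \<eta> \<le> (\<Sum>i<n. r (snd x i))}
      \<le> (\<integral>\<^sup>+x. ennreal (1/(real n * \<eta>)) * (\<Sum>i<n. ennreal (r (snd x i))) \<partial>MM n)"
  proof (rule emeasure_le_nn)
    show "{x \<in> space (MM n). real n * \<eta> \<le> (\<Sum>i<n. r (snd x i))} \<in> sets (MM n)" by measurable
    fix x assume x: "x \<in> {x \<in> space (MM n). real n * \<eta> \<le> (\<Sum>i<n. r (snd x i))}"
    have nn: "i \<in> {..<n} \<Longrightarrow> 0 \<le> r (snd x i)" for i using x by (intro rpos sp_MM) auto
    have "(\<Sum>i<n. ennreal (r (snd x i))) = ennreal (\<Sum>i<n. r (snd x i))" using nn by (intro sum_ennreal) auto
    then show "1 \<le> ennreal (1/(real n * \<eta>)) * (\<Sum>i<n. ennreal (r (snd x i)))"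
      using n eta x ennreal_ge1[of "real n * \<eta>" "\<Sum>i<n. r (snd x i)"] by simp
  qed
  also have "\<dots> = ennreal (1/(real n * \<eta>)) * (\<integral>\<^sup>+x. (\<Sum>i<n. ennreal (r (snd x i))) \<partial>MM n)"
    by (rule nn_integral_cmult) measurable
  also have "(\<integral>\<^sup>+x. (\<Sum>i<n. ennreal (r (snd x i))) \<partial>MM n) = (\<Sum>i<n. \<integral>\<^sup>+x. ennreal (r (snd x i)) \<partial>MM n)"
    by (rule nn_integral_sum) measurable
  also have "(\<Sum>i<n. \<integral>\<^sup>+x. ennreal (r (snd x i)) \<partial>MM n) = (\<Sum>i<n. ennreal (qK K))"
  proof (rule sum.cong)
    fix i assume i: "i \<in> {..<n}"
    have "(\<integral>\<^sup>+x. ennreal (r (snd x i)) \<partial>MM n) = (\<integral>\<^sup>+\<omega>. \<integral>\<^sup>+z. ennreal (r z) \<partial>Mf n i \<partial>\<Omega> n)"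
      using i by (intro nn_comp'[where h="\<lambda>\<omega> z. ennreal (r z)"]) auto
    also have "\<dots> = ennreal (qK K)" using i qK_nn[of K] by (simp add: Mf_def r_def Op.emeasure_space_1)
    finally show "(\<integral>\<^sup>+x. ennreal (r (snd x i)) \<partial>MM n) = ennreal (qK K)" .
  qed simp
  also have "ennreal (1/(real n * \<eta>)) * (\<Sum>i<n. ennreal (qK K)) = ennreal (qK K / \<eta>)"
    using n eta qK_nonneg[of K] by (simp add: ennreal_mult[symmetric] ennreal_of_nat_eq_real_of_nat)
  finally show ?thesis unfolding r_def .
qed

lemma Wbar_fix: "\<omega> \<in> space (\<Omega> n) \<Longrightarrow> Wbar n \<omega> \<in> borel_measurable Mx"
  using measurable_Pair_compose_split[OF Wbar_meas[of n] measurable_const[of \<omega> "\<Omega> n" Mx] measurable_ident]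
  by (simp add: id_def)

definition "Phi n \<omega> = (\<integral>\<^sup>+z. ennreal ((Wbar n \<omega> (fst z) - w (fst z))\<^sup>2) \<partial>P)"

lemma Phi_meas[measurable]: "Phi n \<in> borel_measurable (\<Omega> n)"
proof -
  interpret Pp: prob_space P by (rule P_prob)
  have "(\<lambda>(\<omega>,z). ennreal ((Wbar n \<omega> (fst z) - w (fst z))\<^sup>2)) \<in> borel_measurable (\<Omega> n \<Otimes>\<^sub>M P)"
    by measurable
  from Pp.borel_measurable_nn_integral_fst[OF this] show ?thesis unfolding Phi_def[abs_def] by simp
qed

lemma Phi_distr: assumes "\<omega> \<in> space (\<Omega> n)"
  shows "(\<integral>\<^sup>+x. ennreal ((Wbar n \<omega> x - w x)\<^sup>2) \<partial>distr P Mx fst) = Phi n \<omega>"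
  unfolding Phi_def using Wbar_fix[OF assms] by (subst nn_integral_distr) auto

definition "G n \<delta> = {\<omega> \<in> space (\<Omega> n). Phi n \<omega> \<le> ennreal (\<delta>\<^sup>2)}"

lemma G_sets[measurable]: "G n \<delta> \<in> sets (\<Omega> n)" unfolding G_def by measurable

lemma abs_int_G: assumes om: "\<omega> \<in> G n \<delta>" and d: "\<delta> > 0"
  shows "(\<integral>\<^sup>+z. ennreal \<bar>Wbar n \<omega> (fst z) - w (fst z)\<bar> \<partial>P) \<le> ennreal (2*\<delta>)"
proof -
  interpret Pp: prob_space P by (rule P_prob)
  have os: "\<omega> \<in> space (\<Omega> n)" using om by (simp add: G_def)
  note Wm = Wbar_fix[OF os]
  have pw: "ennreal \<bar>f\<bar> \<le> ennreal (1/\<delta>) * ennreal (f\<^sup>2) + ennreal \<delta>" for f :: real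
  proof -
    have "0 \<le> (\<bar>f\<bar> - \<delta>)\<^sup>2" by simp
    then have "2*\<delta>*\<bar>f\<bar> \<le> f\<^sup>2 + \<delta>\<^sup>2" by (simp add: power2_eq_square algebra_simps)
    then have "\<bar>f\<bar> \<le> f\<^sup>2/\<delta> + \<delta>" using d
      by (simp add: field_simps power2_eq_square) (smt (verit) mult_left_mono abs_ge_zero)
    then have "ennreal \<bar>f\<bar> \<le> ennreal (1/\<delta> * f\<^sup>2 + \<delta>)" by (intro ennreal_leI) simp
    also have "\<dots> = ennreal (1/\<delta>) * ennreal (f\<^sup>2) + ennreal \<delta>"
      using d by (simp add: ennreal_plus[symmetric] ennreal_mult[symmetric] del: ennreal_plus)
    finally show ?thesis .
  qed
  have "(\<integral>\<^sup>+z. ennreal \<bar>Wbar n \<omega> (fst z) - w (fst z)\<bar> \<partial>P)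
      \<le> (\<integral>\<^sup>+z. ennreal (1/\<delta>) * ennreal ((Wbar n \<omega> (fst z) - w (fst z))\<^sup>2) + ennreal \<delta> \<partial>P)"
    by (intro nn_integral_mono pw)
  also have "\<dots> = ennreal (1/\<delta>) * Phi n \<omega> + ennreal \<delta>"
    unfolding Phi_def using Wm
    by (subst nn_integral_add) (auto simp: nn_integral_cmult Pp.emeasure_space_1)
  also have "\<dots> \<le> ennreal (1/\<delta>) * ennreal (\<delta>\<^sup>2) + ennreal \<delta>"
    using om by (intro add_mono mult_left_mono) (auto simp: G_def)
  also have "\<dots> = ennreal (2*\<delta>)"
    using d by (simp add: ennreal_plus[symmetric] ennreal_mult[symmetric] power2_eq_square del: ennreal_plus)
  finally show ?thesis .
qed

lemma int_Gc: "(\<integral>\<^sup>+x. indicator (space (\<Omega> n) - G n \<delta>) (fst x) \<partial>MM n) = emeasure (\<Omega> n) (space (\<Omega> n) - G n \<delta>)"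
proof -
  interpret Mp: prob_space "Mf n n" by (rule prob_Mf)
  have "(\<integral>\<^sup>+x. indicator (space (\<Omega> n) - G n \<delta>) (fst x) \<partial>MM n)
     = (\<integral>\<^sup>+\<omega>. \<integral>\<^sup>+z. indicator (space (\<Omega> n) - G n \<delta>) \<omega> \<partial>Mf n n \<partial>\<Omega> n)"
    by (rule nn_comp'[where h="\<lambda>\<omega> z. indicator (space (\<Omega> n) - G n \<delta>) \<omega>"]) auto
  also have "\<dots> = (\<integral>\<^sup>+\<omega>. indicator (space (\<Omega> n) - G n \<delta>) \<omega> \<partial>\<Omega> n)"
    by (simp add: Mp.emeasure_space_1)
  also have "\<dots> = emeasure (\<Omega> n) (space (\<Omega> n) - G n \<delta>)" by simp
  finally show ?thesis .
qed

lemma markov_D: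
  assumes n: "n > 0" and eta: "\<eta> > 0" and d: "\<delta> > 0"
  shows "emeasure (MM n) {x \<in> space (MM n). real n * \<eta> \<le> (\<Sum>i<n. \<bar>Wbar n (fst x) (fst (snd x i)) - w (fst (snd x i))\<bar>)}
          \<le> emeasure (\<Omega> n) (space (\<Omega> n) - G n \<delta>) + ennreal (2*\<delta>/\<eta>)"
proof -
  interpret Op: prob_space "\<Omega> n" by (rule \<Omega>_prob)
  define a where "a = (\<lambda>\<omega> (z::'x\<times>'y). \<bar>Wbar n \<omega> (fst z) - w (fst z)\<bar>)"
  have am[measurable]: "(\<lambda>(\<omega>,z). a \<omega> z) \<in> borel_measurable (\<Omega> n \<Otimes>\<^sub>M P)" unfolding a_def by measurable
  define c where "c = ennreal (1/(real n * \<eta>))"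
  let ?Gc = "space (\<Omega> n) - G n \<delta>"
  have "emeasure (MM n) {x \<in> space (MM n). real n * \<eta> \<le> (\<Sum>i<n. a (fst x) (snd x i))}
      \<le> (\<integral>\<^sup>+x. indicator ?Gc (fst x) + (\<Sum>i<n. c * (indicator (G n \<delta>) (fst x) * ennreal (a (fst x) (snd x i)))) \<partial>MM n)"
  proof (rule emeasure_le_nn)
    show "{x \<in> space (MM n). real n * \<eta> \<le> (\<Sum>i<n. a (fst x) (snd x i))} \<in> sets (MM n)"
      unfolding a_def by measurable
    fix x assume x: "x \<in> {x \<in> space (MM n). real n * \<eta> \<le> (\<Sum>i<n. a (fst x) (snd x i))}"
    have fx: "fst x \<in> space (\<Omega> n)" using x by (auto simp: space_pair_measure)
    show "1 \<le> indicator ?Gc (fst x) + (\<Sum>i<n. c * (indicator (G n \<delta>) (fst x) * ennreal (a (fst x) (snd x i))))"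
    proof (cases "fst x \<in> G n \<delta>")
      case False then show ?thesis using fx by simp
    next
      case True
      have "(\<Sum>i<n. ennreal (a (fst x) (snd x i))) = ennreal (\<Sum>i<n. a (fst x) (snd x i))"
        by (intro sum_ennreal) (simp add: a_def)
      then have "(\<Sum>i<n. c * (indicator (G n \<delta>) (fst x) * ennreal (a (fst x) (snd x i))))
          = ennreal (1/(real n * \<eta>)) * ennreal (\<Sum>i<n. a (fst x) (snd x i))"
        using True by (simp add: c_def sum_distrib_left[symmetric])
      also have "\<dots> \<ge> 1" using x n eta by (intro ennreal_ge1) auto
      finally show ?thesis by (simp add: add_increasing)
    qed
  qed
  also have "\<dots> = (\<integral>\<^sup>+x. indicator ?Gc (fst x) \<partial>MM n) + (\<integral>\<^sup>+x. (\<Sum>i<n. c * (indicator (G n \<delta>) (fst x) * ennreal (a (fst x) (snd x i)))) \<partial>MM n)"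
    by (rule nn_integral_add) measurable
  finally have S1: "emeasure (MM n) {x \<in> space (MM n). real n * \<eta> \<le> (\<Sum>i<n. a (fst x) (snd x i))}
     \<le> (\<integral>\<^sup>+x. indicator ?Gc (fst x) \<partial>MM n) + (\<integral>\<^sup>+x. (\<Sum>i<n. c * (indicator (G n \<delta>) (fst x) * ennreal (a (fst x) (snd x i)))) \<partial>MM n)" .
  have I1: "(\<integral>\<^sup>+x. indicator (G n \<delta>) (fst x) * ennreal (a (fst x) (snd x i)) \<partial>MM n) \<le> ennreal (2*\<delta>)"
    if i: "i < n" for i
  proof -
    have MfP: "Mf n i = P" using i by (simp add: Mf_def)
    have "(\<integral>\<^sup>+x. indicator (G n \<delta>) (fst x) * ennreal (a (fst x) (snd x i)) \<partial>MM n)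
        = (\<integral>\<^sup>+\<omega>. \<integral>\<^sup>+z. indicator (G n \<delta>) \<omega> * ennreal (a \<omega> z) \<partial>Mf n i \<partial>\<Omega> n)"
      using i by (intro nn_comp'[where h="\<lambda>\<omega> z. indicator (G n \<delta>) \<omega> * ennreal (a \<omega> z)"]) auto
    also have "\<dots> \<le> (\<integral>\<^sup>+\<omega>. ennreal (2*\<delta>) \<partial>\<Omega> n)"
    proof (rule nn_integral_mono)
      fix \<omega> assume "\<omega> \<in> space (\<Omega> n)"
      show "(\<integral>\<^sup>+z. indicator (G n \<delta>) \<omega> * ennreal (a \<omega> z) \<partial>Mf n i) \<le> ennreal (2*\<delta>)"
      proof (cases "\<omega> \<in> G n \<delta>")
        case True
        have "(\<integral>\<^sup>+z. indicator (G n \<delta>) \<omega> * ennreal (a \<omega> z) \<partial>Mf n i)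
            = (\<integral>\<^sup>+z. ennreal \<bar>Wbar n \<omega> (fst z) - w (fst z)\<bar> \<partial>P)"
          unfolding MfP a_def using True by simp
        also have "\<dots> \<le> ennreal (2*\<delta>)" by (rule abs_int_G[OF True d])
        finally show ?thesis .
      next
        case False
        then show ?thesis by simp
      qed
    qed
    also have "\<dots> = ennreal (2*\<delta>)" by (simp add: Op.emeasure_space_1)
    finally show ?thesis .
  qed
  have "(\<integral>\<^sup>+x. (\<Sum>i<n. c * (indicator (G n \<delta>) (fst x) * ennreal (a (fst x) (snd x i)))) \<partial>MM n)
     = (\<Sum>i<n. \<integral>\<^sup>+x. c * (indicator (G n \<delta>) (fst x) * ennreal (a (fst x) (snd x i))) \<partial>MM n)"
    by (rule nn_integral_sum) measurable
  also have "\<dots> = (\<Sum>i<n. c * \<integral>\<^sup>+x. indicator (G n \<delta>) (fst x) * ennreal (a (fst x) (snd x i)) \<partial>MM n)"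
    by (intro sum.cong refl nn_integral_cmult) measurable
  also have "\<dots> \<le> (\<Sum>i<n. c * ennreal (2*\<delta>))"
    by (intro sum_mono mult_left_mono I1) auto
  also have "(\<Sum>i<n. c * ennreal (2*\<delta>)) = ennreal (2*\<delta>/\<eta>)"
    using n eta d by (simp add: c_def ennreal_mult[symmetric] ennreal_of_nat_eq_real_of_nat)
  finally have S2: "(\<integral>\<^sup>+x. (\<Sum>i<n. c * (indicator (G n \<delta>) (fst x) * ennreal (a (fst x) (snd x i)))) \<partial>MM n) \<le> ennreal (2*\<delta>/\<eta>)" .
  have *: "emeasure (MM n) {x \<in> space (MM n). real n * \<eta> \<le> (\<Sum>i<n. a (fst x) (snd x i))}
     \<le> (\<integral>\<^sup>+x. indicator ?Gc (fst x) \<partial>MM n) + ennreal (2*\<delta>/\<eta>)"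
    using S1 S2 by (meson add_left_mono order_trans)
  have **: "{x \<in> space (MM n). real n * \<eta> \<le> (\<Sum>i<n. a (fst x) (snd x i))}
    = {x \<in> space (MM n). real n * \<eta> \<le> (\<Sum>i<n. \<bar>Wbar n (fst x) (fst (snd x i)) - w (fst (snd x i))\<bar>)}"
    by (simp add: a_def)
  show ?thesis using * unfolding ** int_Gc .
qed

lemma T_inner:
  assumes om: "\<omega> \<in> G n \<delta>" and K: "K > 0" and nK: "K + 1 \<le> real n * \<eta>"
  shows "(\<integral>\<^sup>+z. ennreal (if real n * \<eta> \<le> Wbar n \<omega> (fst z) then 1 else 0) \<partial>Q) \<le> ennreal (2 * qK K + K * \<delta>\<^sup>2)"
proof -
  have os: "\<omega> \<in> space (\<Omega> n)" using om by (simp add: G_def)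
  note Wm[measurable] = Wbar_fix[OF os]
  define r where "r = (\<lambda>z::'x\<times>'y. w (fst z) * (if K < w (fst z) then 1 else (0::real)))"
  have rm[measurable]: "r \<in> borel_measurable P" unfolding r_def by measurable
  have "(\<integral>\<^sup>+z. ennreal (if real n * \<eta> \<le> Wbar n \<omega> (fst z) then 1 else 0) \<partial>Q)
     = (\<integral>\<^sup>+z. ennreal (w (fst z)) * ennreal (if real n * \<eta> \<le> Wbar n \<omega> (fst z) then 1 else 0) \<partial>P)"
    unfolding Q_def by (rule nn_integral_density) measurable
  also have "\<dots> \<le> (\<integral>\<^sup>+z. ennreal 2 * ennreal (r z) + ennreal K * ennreal ((Wbar n \<omega> (fst z) - w (fst z))\<^sup>2) \<partial>P)"
  proof (rule nn_integral_mono)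
    fix z assume z: "z \<in> space P"
    have W: "0 < w (fst z)" by (rule wfst_pos[OF z])
    have pw: "w (fst z) * (if real n * \<eta> \<le> Wbar n \<omega> (fst z) then 1 else 0) \<le> 2 * r z + K * (Wbar n \<omega> (fst z) - w (fst z))\<^sup>2"
    proof (cases "real n * \<eta> \<le> Wbar n \<omega> (fst z)")
      case True
      show ?thesis
      proof (cases "K < w (fst z)")
        case True
        then show ?thesis using W K by (simp add: r_def)
      next
        case False
        then have "1 \<le> Wbar n \<omega> (fst z) - w (fst z)" using \<open>real n * \<eta> \<le> Wbar n \<omega> (fst z)\<close> nK by linarith
        then have "1 \<le> (Wbar n \<omega> (fst z) - w (fst z))\<^sup>2" by (simp add: one_le_power)
        then have kk: "K \<le> K * (Wbar n \<omega> (fst z) - w (fst z))\<^sup>2" using K by (simp add: mult_le_cancel_left1)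
        have "w (fst z) \<le> K * (Wbar n \<omega> (fst z) - w (fst z))\<^sup>2" using kk False by linarith
        then show ?thesis using False True W by (simp add: r_def)
      qed
    next
      case False
      then show ?thesis using W K by (simp add: r_def)
    qed
    have "ennreal (w (fst z)) * ennreal (if real n * \<eta> \<le> Wbar n \<omega> (fst z) then 1 else 0)
        = ennreal (w (fst z) * (if real n * \<eta> \<le> Wbar n \<omega> (fst z) then 1 else 0))"
      using W by (subst ennreal_mult) auto
    also have "\<dots> \<le> ennreal (2 * r z + K * (Wbar n \<omega> (fst z) - w (fst z))\<^sup>2)"
      by (rule ennreal_leI[OF pw])
    also have "\<dots> = ennreal (2 * r z) + ennreal (K * (Wbar n \<omega> (fst z) - w (fst z))\<^sup>2)"
      using W K by (intro ennreal_plus) (auto simp: r_def)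
    also have "ennreal (2 * r z) = ennreal 2 * ennreal (r z)"
      using W by (intro ennreal_mult) (auto simp: r_def)
    also have "ennreal (K * (Wbar n \<omega> (fst z) - w (fst z))\<^sup>2) = ennreal K * ennreal ((Wbar n \<omega> (fst z) - w (fst z))\<^sup>2)"
      using K by (intro ennreal_mult) auto
    finally show "ennreal (w (fst z)) * ennreal (if real n * \<eta> \<le> Wbar n \<omega> (fst z) then 1 else 0)
        \<le> ennreal 2 * ennreal (r z) + ennreal K * ennreal ((Wbar n \<omega> (fst z) - w (fst z))\<^sup>2)" .
  qed
  also have "\<dots> = ennreal 2 * (\<integral>\<^sup>+z. ennreal (r z) \<partial>P) + ennreal K * Phi n \<omega>"
    unfolding Phi_def
    by (subst nn_integral_add) (auto simp: nn_integral_cmult)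
  also have "\<dots> \<le> ennreal 2 * ennreal (qK K) + ennreal K * ennreal (\<delta>\<^sup>2)"
    using om qK_nn[of K] by (intro add_mono mult_left_mono) (auto simp: G_def r_def)
  also have "\<dots> = ennreal (2 * qK K) + ennreal (K * \<delta>\<^sup>2)"
    using K qK_nonneg[of K] by (simp add: ennreal_mult)
  also have "\<dots> = ennreal (2 * qK K + K * \<delta>\<^sup>2)"
    using K qK_nonneg[of K] by (intro ennreal_plus[symmetric]) auto
  finally show ?thesis .
qed

lemma markov_T:
  assumes K: "K > 0" and nK: "K + 1 \<le> real n * \<eta>"
  shows "emeasure (MM n) {x \<in> space (MM n). real n * \<eta> \<le> Wbar n (fst x) (fst (snd x n))}
          \<le> emeasure (\<Omega> n) (space (\<Omega> n) - G n \<delta>) + ennreal (2 * qK K + K * \<delta>\<^sup>2)"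
proof -
  interpret Op: prob_space "\<Omega> n" by (rule \<Omega>_prob)
  define b where "b = (\<lambda>\<omega> (z::'x\<times>'y). if real n * \<eta> \<le> Wbar n \<omega> (fst z) then 1 else (0::real))"
  have bm[measurable]: "(\<lambda>(\<omega>,z). b \<omega> z) \<in> borel_measurable (\<Omega> n \<Otimes>\<^sub>M P)" unfolding b_def by measurable
  let ?Gc = "space (\<Omega> n) - G n \<delta>"
  have "emeasure (MM n) {x \<in> space (MM n). real n * \<eta> \<le> Wbar n (fst x) (fst (snd x n))}
      \<le> (\<integral>\<^sup>+x. indicator ?Gc (fst x) + indicator (G n \<delta>) (fst x) * ennreal (b (fst x) (snd x n)) \<partial>MM n)"
  proof (rule emeasure_le_nn)
    show "{x \<in> space (MM n). real n * \<eta> \<le> Wbar n (fst x) (fst (snd x n))} \<in> sets (MM n)"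
      by measurable
    fix x assume x: "x \<in> {x \<in> space (MM n). real n * \<eta> \<le> Wbar n (fst x) (fst (snd x n))}"
    have fx: "fst x \<in> space (\<Omega> n)" using x by (auto simp: space_pair_measure)
    show "1 \<le> indicator ?Gc (fst x) + indicator (G n \<delta>) (fst x) * ennreal (b (fst x) (snd x n))"
      using x fx by (cases "fst x \<in> G n \<delta>") (auto simp: b_def)
  qed
  also have "\<dots> = (\<integral>\<^sup>+x. indicator ?Gc (fst x) \<partial>MM n) + (\<integral>\<^sup>+x. indicator (G n \<delta>) (fst x) * ennreal (b (fst x) (snd x n)) \<partial>MM n)"
    by (rule nn_integral_add) measurable
  finally have S1: "emeasure (MM n) {x \<in> space (MM n). real n * \<eta> \<le> Wbar n (fst x) (fst (snd x n))}
      \<le> (\<integral>\<^sup>+x. indicator ?Gc (fst x) \<partial>MM n) + (\<integral>\<^sup>+x. indicator (G n \<delta>) (fst x) * ennreal (b (fst x) (snd x n)) \<partial>MM n)" .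
  have "(\<integral>\<^sup>+x. indicator (G n \<delta>) (fst x) * ennreal (b (fst x) (snd x n)) \<partial>MM n)
      = (\<integral>\<^sup>+\<omega>. \<integral>\<^sup>+z. indicator (G n \<delta>) \<omega> * ennreal (b \<omega> z) \<partial>Mf n n \<partial>\<Omega> n)"
    by (intro nn_comp'[where h="\<lambda>\<omega> z. indicator (G n \<delta>) \<omega> * ennreal (b \<omega> z)"]) auto
  also have "\<dots> \<le> (\<integral>\<^sup>+\<omega>. ennreal (2 * qK K + K * \<delta>\<^sup>2) \<partial>\<Omega> n)"
  proof (rule nn_integral_mono)
    fix \<omega> assume "\<omega> \<in> space (\<Omega> n)"
    show "(\<integral>\<^sup>+z. indicator (G n \<delta>) \<omega> * ennreal (b \<omega> z) \<partial>Mf n n) \<le> ennreal (2 * qK K + K * \<delta>\<^sup>2)"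
    proof (cases "\<omega> \<in> G n \<delta>")
      case True
      have "(\<integral>\<^sup>+z. indicator (G n \<delta>) \<omega> * ennreal (b \<omega> z) \<partial>Mf n n)
          = (\<integral>\<^sup>+z. ennreal (if real n * \<eta> \<le> Wbar n \<omega> (fst z) then 1 else 0) \<partial>Q)"
        unfolding b_def using True by (simp add: Mf_def)
      also have "\<dots> \<le> ennreal (2 * qK K + K * \<delta>\<^sup>2)" by (rule T_inner[OF True K nK])
      finally show ?thesis .
    next
      case False
      then show ?thesis by simp
    qed
  qed
  also have "\<dots> = ennreal (2 * qK K + K * \<delta>\<^sup>2)" by (simp add: Op.emeasure_space_1)
  finally have S2: "(\<integral>\<^sup>+x. indicator (G n \<delta>) (fst x) * ennreal (b (fst x) (snd x n)) \<partial>MM n) \<le> ennreal (2 * qK K + K * \<delta>\<^sup>2)" .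
  show ?thesis using S1 S2 unfolding int_Gc by (meson add_left_mono order_trans)
qed

lemma main_bound:
  assumes n: "n > 0" and K: "K > 0" and eta: "\<eta> > 0" and d: "\<delta> > 0" and nK: "K + 1 \<le> real n * \<eta>"
    and c: "(\<integral>z. min (w (fst z)) K * Lf z * (if s (fst z) \<le> t1 then 1 else 0) \<partial>P) \<ge> \<alpha> + 6*\<eta>"
  shows "(\<integral>\<^sup>+(\<omega>,Z). ennreal (Lf (Z n) * (if evalue n (\<lambda>i. Wbar n \<omega> (fst (Z i))) (\<lambda>i. Lf (Z i)) (\<lambda>i. s (fst (Z i))) \<alpha> \<ge> ereal (1/\<alpha>) then 1 else 0)) \<partial>MM n)
     \<le> ennreal (Fint t1) + ennreal (exp (-2*(real n*\<eta>)\<^sup>2/(real n*K\<^sup>2))) + ennreal (exp (-2*(real n*\<eta>)\<^sup>2/(real n*K\<^sup>2)))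
        + ennreal (qK K / \<eta>) + (emeasure (\<Omega> n) (space (\<Omega> n) - G n \<delta>) + ennreal (2*\<delta>/\<eta>))
        + (emeasure (\<Omega> n) (space (\<Omega> n) - G n \<delta>) + ennreal (2 * qK K + K * \<delta>\<^sup>2))"
proof -
  define u where "u = (\<lambda>z::'x\<times>'y. min (w (fst z)) K * Lf z * (if s (fst z) \<le> t1 then 1 else (0::real)))"
  define v where "v = (\<lambda>z::'x\<times>'y. min (w (fst z)) K)"
  define r where "r = (\<lambda>z::'x\<times>'y. w (fst z) * (if K < w (fst z) then 1 else (0::real)))"
  have um[measurable]: "u \<in> borel_measurable P" unfolding u_def by measurable
  have vm[measurable]: "v \<in> borel_measurable P" unfolding v_def by measurable
  have rm[measurable]: "r \<in> borel_measurable P" unfolding r_def by measurable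
  define cu where "cu = (\<integral>z. u z \<partial>P)"
  define cv where "cv = (\<integral>z. v z \<partial>P)"
  have cu: "cu \<ge> \<alpha> + 6*\<eta>" using c by (simp add: cu_def u_def)
  have cv: "cv \<le> 1"
  proof -
    have b: "z \<in> space P \<Longrightarrow> \<bar>min (w (fst z)) K\<bar> \<le> \<bar>w (fst z)\<bar>" for z
      using wfst_pos[of z] K by (auto simp: min_def)
    have "cv \<le> (\<integral>z. w (fst z) \<partial>P)" unfolding cv_def v_def
      using b by (intro integral_mono w_int Bochner_Integration.integrable_bound[OF w_int]) (auto intro!: AE_I2)
    then show ?thesis using w_int1 by simp
  qed
  define E where "E = (\<lambda>\<omega> Z. ennreal (Lf (Z n) * (if evalue n (\<lambda>i. Wbar n \<omega> (fst (Z i))) (\<lambda>i. Lf (Z i)) (\<lambda>i. s (fst (Z i))) \<alpha> \<ge> ereal (1/\<alpha>) then 1 else 0)))"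
  define Tsum where "Tsum = (\<lambda>x::'o \<times> (nat \<Rightarrow> 'x \<times> 'y). \<Sum>i\<le>n. Wbar n (fst x) (fst (snd x i)))"
  define Bad where "Bad = {x \<in> space (MM n). (\<Sum>i<n. Wbar n (fst x) (fst (snd x i)) * Lf (snd x i) * (if s (fst (snd x i)) \<le> t1 then 1 else 0))
        \<le> \<alpha> * Tsum x}"
  have Wi_m: "(\<lambda>x. Wbar n (fst x) (fst (snd x i))) \<in> borel_measurable (MM n)" if "i \<in> {..n}" for i
  proof -
    have "i \<le> n" using that by simp
    then show ?thesis by measurable
  qed
  have sumW[measurable]: "Tsum \<in> borel_measurable (MM n)"
    unfolding Tsum_def by (rule borel_measurable_sum[OF Wi_m])
  define Ssum where "Ssum = (\<lambda>x::'o \<times> (nat \<Rightarrow> 'x \<times> 'y). \<Sum>i<n. Wbar n (fst x) (fst (snd x i)) * Lf (snd x i) * (if s (fst (snd x i)) \<le> t1 then 1 else 0))"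
  have Si_m: "(\<lambda>x. Wbar n (fst x) (fst (snd x i)) * Lf (snd x i) * (if s (fst (snd x i)) \<le> t1 then 1 else 0)) \<in> borel_measurable (MM n)" if "i \<in> {..<n}" for i
  proof -
    have "i \<le> n" using that by simp
    then show ?thesis by measurable
  qed
  have sumS: "Ssum \<in> borel_measurable (MM n)"
    unfolding Ssum_def by (rule borel_measurable_sum[OF Si_m])
  have aT: "(\<lambda>x. \<alpha> * Tsum x) \<in> borel_measurable (MM n)" using sumW by (rule borel_measurable_times[OF borel_measurable_const])
  have BadE: "Bad = {x \<in> space (MM n). Ssum x \<le> \<alpha> * Tsum x}" by (simp add: Bad_def Ssum_def)
  have Bad_sets[measurable]: "Bad \<in> sets (MM n)" unfolding BadE
    by (rule borel_measurable_le[OF sumS aT])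
  have step1: "(\<integral>\<^sup>+(\<omega>,Z). E \<omega> Z \<partial>MM n) \<le> (\<integral>\<^sup>+x. ennreal (Lf (snd x n) * (if s (fst (snd x n)) < t1 then 1 else 0)) + indicator Bad x \<partial>MM n)"
  proof (rule nn_integral_mono)
    fix x assume x: "x \<in> space (MM n)"
    obtain \<omega> Z where xe: "x = (\<omega>, Z)" by (cases x)
    have om: "\<omega> \<in> space (\<Omega> n)" using sp_MM(2)[OF x, of n] xe by simp
    have Zi: "i \<le> n \<Longrightarrow> Z i \<in> space P" for i using sp_MM(1)[OF x, of i] xe by simp
    have Ln: "0 \<le> Lf (Z n)" "Lf (Z n) \<le> 1" using Lf_space[OF Zi[of n]] by auto
    show "(case x of (\<omega>, Z) \<Rightarrow> E \<omega> Z) \<le> ennreal (Lf (snd x n) * (if s (fst (snd x n)) < t1 then 1 else 0)) + indicator Bad x"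
    proof (cases "evalue n (\<lambda>i. Wbar n \<omega> (fst (Z i))) (\<lambda>i. Lf (Z i)) (\<lambda>i. s (fst (Z i))) \<alpha> \<ge> ereal (1/\<alpha>)")
      case False
      then show ?thesis by (simp add: xe E_def)
    next
      case ev: True
      show ?thesis
      proof (cases "s (fst (Z n)) < t1")
        case True
        then show ?thesis using ev by (simp add: xe E_def)
      next
        case False
        have "(\<Sum>i<n. Wbar n \<omega> (fst (Z i)) * Lf (Z i) * (if s (fst (Z i)) \<le> t1 then 1 else 0))
             \<le> \<alpha> * (\<Sum>i\<le>n. Wbar n \<omega> (fst (Z i)))"
        proof (rule evalue_bound[OF _ _ _ ev])
          show "\<And>i. i \<le> n \<Longrightarrow> 0 \<le> Wbar n \<omega> (fst (Z i))" using om Zi fst_space Wbar_nonneg by blast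
          show "\<And>i. i \<le> n \<Longrightarrow> Lf (Z i) \<in> {0..1}" using Zi Lf_space by blast
          show "0 < \<alpha>" using \<alpha>_range by simp
          show "t1 \<le> s (fst (Z n))" using False by simp
        qed
        then have "x \<in> Bad" using x by (simp add: Bad_def Tsum_def xe)
        then show ?thesis using ev Ln by (simp add: xe E_def)
      qed
    qed
  qed
  also have "\<dots> = (\<integral>\<^sup>+x. ennreal (Lf (snd x n) * (if s (fst (snd x n)) < t1 then 1 else 0)) \<partial>MM n) + emeasure (MM n) Bad"
    by (subst nn_integral_add) auto
  also have "(\<integral>\<^sup>+x. ennreal (Lf (snd x n) * (if s (fst (snd x n)) < t1 then 1 else 0)) \<partial>MM n) \<le> ennreal (Fint t1)"
  proof -
    have eq: "(\<lambda>x. ennreal (Lf (snd x n) * (if s (fst (snd x n)) < t1 then 1 else 0)))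
        = (\<lambda>(\<omega>,Z). ennreal (Lf (Z n) * (if s (fst (Z n)) < t1 then 1 else 0)))" by auto
    show ?thesis unfolding eq by (rule test_int)
  qed
  finally have S1: "(\<integral>\<^sup>+(\<omega>,Z). E \<omega> Z \<partial>MM n) \<le> ennreal (Fint t1) + emeasure (MM n) Bad"
    by (simp add: add_right_mono)
  define B1 where "B1 = {x \<in> space (MM n). (\<Sum>i<n. u (snd x i)) \<le> real n * cu - real n * \<eta>}"
  define B2 where "B2 = {x \<in> space (MM n). (\<Sum>i<n. v (snd x i)) \<ge> real n * cv + real n * \<eta>}"
  define B3 where "B3 = {x \<in> space (MM n). real n * \<eta> \<le> (\<Sum>i<n. r (snd x i))}"
  define B4 where "B4 = {x \<in> space (MM n). real n * \<eta> \<le> (\<Sum>i<n. \<bar>Wbar n (fst x) (fst (snd x i)) - w (fst (snd x i))\<bar>)}"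
  define B5 where "B5 = {x \<in> space (MM n). real n * \<eta> \<le> Wbar n (fst x) (fst (snd x n))}"
  have [measurable]: "B1 \<in> sets (MM n)" "B2 \<in> sets (MM n)" "B3 \<in> sets (MM n)" "B4 \<in> sets (MM n)" "B5 \<in> sets (MM n)"
    unfolding B1_def B2_def B3_def B4_def B5_def by measurable
  have incl: "Bad \<subseteq> B1 \<union> B2 \<union> B3 \<union> B4 \<union> B5"
  proof
    fix x assume xB: "x \<in> Bad"
    have x: "x \<in> space (MM n)" using xB by (simp add: Bad_def)
    show "x \<in> B1 \<union> B2 \<union> B3 \<union> B4 \<union> B5"
    proof (rule ccontr)
      assume nB: "x \<notin> B1 \<union> B2 \<union> B3 \<union> B4 \<union> B5"
      define \<omega> where "\<omega> = fst x"
      define Z where "Z = snd x"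
      have om: "\<omega> \<in> space (\<Omega> n)" using sp_MM(2)[OF x, of n] by (simp add: \<omega>_def)
      have Zi: "i \<le> n \<Longrightarrow> Z i \<in> space P" for i using sp_MM(1)[OF x, of i] by (simp add: Z_def)
      define Wi where "Wi = (\<lambda>i. Wbar n \<omega> (fst (Z i)))"
      define ai where "ai = (\<lambda>i. \<bar>Wbar n \<omega> (fst (Z i)) - w (fst (Z i))\<bar>)"
      define Si where "Si = (\<lambda>i. Wbar n \<omega> (fst (Z i)) * Lf (Z i) * (if s (fst (Z i)) \<le> t1 then 1 else 0))"
      have pa: "u (Z i) - ai i \<le> Si i" if i: "i < n" for i
      proof -
        have L: "0 \<le> Lf (Z i)" "Lf (Z i) \<le> 1" using Lf_space[OF Zi[of i]] i by auto
        have W: "0 < w (fst (Z i))" using wfst_pos[OF Zi[of i]] i by simp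
        define I where "I = (if s (fst (Z i)) \<le> t1 then 1 else (0::real))"
        have LI: "0 \<le> Lf (Z i) * I" "Lf (Z i) * I \<le> 1" using L by (auto simp: I_def)
        have "u (Z i) \<le> w (fst (Z i)) * (Lf (Z i) * I)" unfolding u_def I_def[symmetric]
          using LI W by (simp add: mult.assoc mult_right_mono)
        moreover have "w (fst (Z i)) * (Lf (Z i) * I) - Wi i * (Lf (Z i) * I) \<le> ai i"
        proof -
          have "w (fst (Z i)) * (Lf (Z i) * I) - Wi i * (Lf (Z i) * I) = (w (fst (Z i)) - Wi i) * (Lf (Z i) * I)"
            by (simp add: algebra_simps)
          also have "\<dots> \<le> \<bar>w (fst (Z i)) - Wi i\<bar> * (Lf (Z i) * I)" using LI by (intro mult_right_mono) auto
          also have "\<dots> \<le> \<bar>w (fst (Z i)) - Wi i\<bar> * 1" using LI by (intro mult_left_mono) auto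
          also have "\<bar>w (fst (Z i)) - Wi i\<bar> * 1 = ai i" unfolding ai_def Wi_def by (simp add: abs_minus_commute)
          finally show ?thesis .
        qed
        ultimately show ?thesis by (simp add: Si_def Wi_def I_def mult.assoc)
      qed
      have pb: "Wi i \<le> v (Z i) + r (Z i) + ai i" if i: "i < n" for i
        using K by (auto simp: Wi_def v_def r_def ai_def min_def)
      have h1: "(\<Sum>i<n. u (Z i)) - (\<Sum>i<n. ai i) \<le> (\<Sum>i<n. Si i)"
      proof -
        have "(\<Sum>i<n. u (Z i)) - (\<Sum>i<n. ai i) = (\<Sum>i<n. u (Z i) - ai i)" by (simp add: sum_subtractf)
        also have "\<dots> \<le> (\<Sum>i<n. Si i)" using pa by (intro sum_mono) simp
        finally show ?thesis .
      qed
      have h2: "(\<Sum>i<n. Si i) \<le> \<alpha> * (\<Sum>i\<le>n. Wi i)" using xB by (simp add: Bad_def Tsum_def Si_def Wi_def \<omega>_def Z_def)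
      have "(\<Sum>i<n. Wi i) \<le> (\<Sum>i<n. v (Z i) + r (Z i) + ai i)" using pb by (intro sum_mono) auto
      moreover have "(\<Sum>i\<le>n. Wi i) = (\<Sum>i<n. Wi i) + Wi n"
        unfolding lessThan_Suc_atMost[symmetric] by (rule sum.lessThan_Suc)
      moreover have "(\<Sum>i<n. v (Z i) + r (Z i) + ai i) = (\<Sum>i<n. v (Z i)) + (\<Sum>i<n. r (Z i)) + (\<Sum>i<n. ai i)"
        by (simp add: sum.distrib)
      ultimately have h3: "(\<Sum>i\<le>n. Wi i) \<le> (\<Sum>i<n. v (Z i)) + (\<Sum>i<n. r (Z i)) + (\<Sum>i<n. ai i) + Wi n"
        by linarith
      have b1: "(\<Sum>i<n. u (Z i)) > real n * cu - real n * \<eta>" using nB x by (auto simp: B1_def Z_def)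
      have b2: "(\<Sum>i<n. v (Z i)) < real n * cv + real n * \<eta>" using nB x by (auto simp: B2_def Z_def)
      have b3: "(\<Sum>i<n. r (Z i)) < real n * \<eta>" using nB x by (auto simp: B3_def Z_def)
      have b4: "(\<Sum>i<n. ai i) < real n * \<eta>" using nB x by (auto simp: B4_def Z_def ai_def \<omega>_def)
      have b5: "Wi n < real n * \<eta>" using nB x by (auto simp: B5_def Z_def Wi_def \<omega>_def)
      show False
        using arith_core[OF _ \<alpha>_range eta cv cu h1 h2 h3 b1 b2 b3 b4 b5] n by simp
    qed
  qed
  have "emeasure (MM n) Bad \<le> emeasure (MM n) (B1 \<union> B2 \<union> B3 \<union> B4 \<union> B5)"
    using incl by (intro emeasure_mono) auto
  also have "\<dots> \<le> emeasure (MM n) B1 + emeasure (MM n) B2 + emeasure (MM n) B3 + emeasure (MM n) B4 + emeasure (MM n) B5"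
    by (intro order_trans[OF emeasure_subadditive] add_mono order_refl) auto
  finally have S2: "emeasure (MM n) Bad \<le> emeasure (MM n) B1 + emeasure (MM n) B2 + emeasure (MM n) B3 + emeasure (MM n) B4 + emeasure (MM n) B5" .
  have urange: "z \<in> space P \<Longrightarrow> u z \<in> {0..K}" for z
  proof -
    assume z: "z \<in> space P"
    have L: "0 \<le> Lf z" "Lf z \<le> 1" using Lf_space[OF z] by auto
    have W: "0 < w (fst z)" using wfst_pos[OF z] by simp
    have "min (w (fst z)) K * Lf z \<le> min (w (fst z)) K" using L W K by (intro mult_left_le) auto
    then show ?thesis using L W K by (auto simp: u_def)
  qed
  have vrange: "z \<in> space P \<Longrightarrow> v z \<in> {0..K}" for z using wfst_pos[of z] K by (auto simp: v_def)
  have nneta: "real n * \<eta> \<ge> 0" using eta by simp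
  have E1: "emeasure (MM n) B1 \<le> ennreal (exp (-2*(real n*\<eta>)\<^sup>2/(real n*K\<^sup>2)))"
  proof -
    have "B1 = space (\<Omega> n) \<times> {Z \<in> space (PM n). (\<Sum>i<n. u (Z i)) \<le> real n * (\<integral>z. u z \<partial>P) - real n * \<eta>}"
      by (auto simp: B1_def cu_def space_pair_measure)
    moreover have "{Z \<in> space (PM n). (\<Sum>i<n. u (Z i)) \<le> real n * (\<integral>z. u z \<partial>P) - real n * \<eta>} \<in> sets (PM n)"
      by measurable
    ultimately show ?thesis using hoeff(1)[OF um urange K n nneta] by (simp add: emeasure_snd_event)
  qed
  have E2: "emeasure (MM n) B2 \<le> ennreal (exp (-2*(real n*\<eta>)\<^sup>2/(real n*K\<^sup>2)))"
  proof -
    have "B2 = space (\<Omega> n) \<times> {Z \<in> space (PM n). (\<Sum>i<n. v (Z i)) \<ge> real n * (\<integral>z. v z \<partial>P) + real n * \<eta>}"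
      by (auto simp: B2_def cv_def space_pair_measure)
    moreover have "{Z \<in> space (PM n). (\<Sum>i<n. v (Z i)) \<ge> real n * (\<integral>z. v z \<partial>P) + real n * \<eta>} \<in> sets (PM n)"
      by measurable
    ultimately show ?thesis using hoeff(2)[OF vm vrange K n nneta] by (simp add: emeasure_snd_event)
  qed
  have E3: "emeasure (MM n) B3 \<le> ennreal (qK K / \<eta>)"
    using markov_R[OF n eta, of K] by (simp add: B3_def r_def)
  have E4: "emeasure (MM n) B4 \<le> emeasure (\<Omega> n) (space (\<Omega> n) - G n \<delta>) + ennreal (2*\<delta>/\<eta>)"
    using markov_D[OF n eta d] by (simp add: B4_def)
  have E5: "emeasure (MM n) B5 \<le> emeasure (\<Omega> n) (space (\<Omega> n) - G n \<delta>) + ennreal (2 * qK K + K * \<delta>\<^sup>2)"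
    using markov_T[OF K nK, of \<delta>] by (simp add: B5_def)
  have "(\<integral>\<^sup>+(\<omega>,Z). E \<omega> Z \<partial>MM n) \<le> ennreal (Fint t1) + (emeasure (MM n) B1 + emeasure (MM n) B2 + emeasure (MM n) B3 + emeasure (MM n) B4 + emeasure (MM n) B5)"
    using S1 S2 by (meson add_left_mono order_trans)
  also have "\<dots> \<le> ennreal (Fint t1) + (ennreal (exp (-2*(real n*\<eta>)\<^sup>2/(real n*K\<^sup>2))) + ennreal (exp (-2*(real n*\<eta>)\<^sup>2/(real n*K\<^sup>2)))
        + ennreal (qK K / \<eta>) + (emeasure (\<Omega> n) (space (\<Omega> n) - G n \<delta>) + ennreal (2*\<delta>/\<eta>))
        + (emeasure (\<Omega> n) (space (\<Omega> n) - G n \<delta>) + ennreal (2 * qK K + K * \<delta>\<^sup>2)))"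
    by (intro add_mono order_refl E1 E2 E3 E4 E5)
  finally show ?thesis unfolding E_def by (simp add: add.assoc)
qed

lemma cu_bound: assumes K: "K > 0"
  shows "Fint t - (\<integral>z. min (w (fst z)) K * Lf z * (if s (fst z) \<le> t then 1 else 0) \<partial>P) \<le> qK K"
proof -
  have mi: "integrable P (\<lambda>z. min (w (fst z)) K * Lf z * (if s (fst z) \<le> t then 1 else 0))"
  proof (rule Bochner_Integration.integrable_bound[OF Fint_int[of t]])
    show "(\<lambda>z. min (w (fst z)) K * Lf z * (if s (fst z) \<le> t then 1 else 0)) \<in> borel_measurable P" by measurable
    show "AE z in P. norm (min (w (fst z)) K * Lf z * (if s (fst z) \<le> t then 1 else 0))
        \<le> norm (w (fst z) * Lf z * (if s (fst z) \<le> t then 1 else 0))"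
    proof (rule AE_I2)
      fix z assume z: "z \<in> space P"
      have L: "0 \<le> Lf z" using Lf_space[OF z] by auto
      have W: "0 < w (fst z)" using wfst_pos[OF z] .
      have "min (w (fst z)) K * Lf z \<le> w (fst z) * Lf z" using L by (intro mult_right_mono) auto
      moreover have "0 \<le> min (w (fst z)) K * Lf z" using L W K by simp
      ultimately show "norm (min (w (fst z)) K * Lf z * (if s (fst z) \<le> t then 1 else 0))
        \<le> norm (w (fst z) * Lf z * (if s (fst z) \<le> t then 1 else 0))" using W L by auto
    qed
  qed
  have "Fint t - (\<integral>z. min (w (fst z)) K * Lf z * (if s (fst z) \<le> t then 1 else 0) \<partial>P)
      = (\<integral>z. w (fst z) * Lf z * (if s (fst z) \<le> t then 1 else 0) - min (w (fst z)) K * Lf z * (if s (fst z) \<le> t then 1 else 0) \<partial>P)"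
    unfolding Fint_def by (rule Bochner_Integration.integral_diff[OF Fint_int mi, symmetric])
  also have "\<dots> \<le> qK K" unfolding qK_def
  proof (rule integral_mono)
    show "integrable P (\<lambda>z. w (fst z) * Lf z * (if s (fst z) \<le> t then 1 else 0) - min (w (fst z)) K * Lf z * (if s (fst z) \<le> t then 1 else 0))"
      by (intro Bochner_Integration.integrable_diff Fint_int mi)
    show "integrable P (\<lambda>z. w (fst z) * (if K < w (fst z) then 1 else 0))" by (rule qK_int)
    fix z assume z: "z \<in> space P"
    have L: "0 \<le> Lf z" "Lf z \<le> 1" using Lf_space[OF z] by auto
    have W: "0 < w (fst z)" using wfst_pos[OF z] .
    define I where "I = (if s (fst z) \<le> t then 1 else (0::real))"
    have LI: "0 \<le> Lf z * I" "Lf z * I \<le> 1" using L by (auto simp: I_def)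
    have "w (fst z) * Lf z * I - min (w (fst z)) K * Lf z * I = (w (fst z) - min (w (fst z)) K) * (Lf z * I)"
      by (simp add: algebra_simps)
    also have "\<dots> \<le> (w (fst z) - min (w (fst z)) K) * 1" using LI by (intro mult_left_mono) auto
    also have "\<dots> \<le> w (fst z) * (if K < w (fst z) then 1 else 0)" using W K by (auto simp: min_def)
    finally show "w (fst z) * Lf z * (if s (fst z) \<le> t then 1 else 0) - min (w (fst z)) K * Lf z * (if s (fst z) \<le> t then 1 else 0)
        \<le> w (fst z) * (if K < w (fst z) then 1 else 0)" by (simp add: I_def)
  qed
  finally show ?thesis .
qed

lemma eventually_bound:
  assumes cons: "\<And>\<epsilon>. \<epsilon> > 0 \<Longrightarrow>
         (\<lambda>n. emeasure (\<Omega> n) {\<omega> \<in> space (\<Omega> n).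
             (\<integral>\<^sup>+ x. ennreal ((Wbar n \<omega> x - w x)\<^sup>2) \<partial>(distr P Mx fst)) > ennreal (\<epsilon>\<^sup>2)})
         \<longlonglongrightarrow> 0"
   and e: "e > 0" and t1a: "Fint t1 > \<alpha>" and t1b: "Fint t1 < \<alpha> + e/2"
  shows "eventually (\<lambda>n. (\<integral>\<^sup>+(\<omega>,Z). ennreal (Lf (Z n) * (if evalue n (\<lambda>i. Wbar n \<omega> (fst (Z i))) (\<lambda>i. Lf (Z i)) (\<lambda>i. s (fst (Z i))) \<alpha> \<ge> ereal (1/\<alpha>) then 1 else 0)) \<partial>MM n) \<le> ennreal (\<alpha> + e)) sequentially"
proof -
  define \<eta> where "\<eta> = (Fint t1 - \<alpha>)/8"
  define \<theta> where "\<theta> = e/16"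
  have eta: "\<eta> > 0" using t1a by (simp add: \<eta>_def)
  have th: "\<theta> > 0" using e by (simp add: \<theta>_def)
  define q0 where "q0 = min (\<eta>*\<theta>) (min \<theta> \<eta>)"
  have q0: "q0 > 0" using eta th by (simp add: q0_def)
  obtain K where K: "K > 0" and qK: "qK K \<le> q0" using qK_small[OF q0] by blast
  have qK1: "qK K \<le> \<eta>*\<theta>" "qK K \<le> \<theta>" "qK K \<le> \<eta>" using qK by (auto simp: q0_def)
  define Iu where "Iu = (\<integral>z. min (w (fst z)) K * Lf z * (if s (fst z) \<le> t1 then 1 else 0) \<partial>P)"
  have "Fint t1 - Iu \<le> qK K" using cu_bound[OF K, of t1] unfolding Iu_def .
  then have cu': "Iu \<ge> \<alpha> + 6*\<eta>" using qK1(3) t1a unfolding \<eta>_def by (rule arith8)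
  have cu: "(\<integral>z. min (w (fst z)) K * Lf z * (if s (fst z) \<le> t1 then 1 else 0) \<partial>P) \<ge> \<alpha> + 6*\<eta>"
    using cu' unfolding Iu_def .
  define \<delta> where "\<delta> = min (\<theta>*\<eta>/2) (min 1 (\<theta>/K))"
  have d: "\<delta> > 0" using th eta K by (simp add: \<delta>_def)
  have d1: "\<delta> \<le> \<theta>*\<eta>/2" "\<delta> \<le> 1" "\<delta> \<le> \<theta>/K" unfolding \<delta>_def
    by (meson min.cobounded1 min.cobounded2 order_trans)+
  have r1: "qK K / \<eta> \<le> \<theta>" using qK1 eta by (simp add: divide_le_eq mult.commute)
  have r2: "2*\<delta>/\<eta> \<le> \<theta>"
  proof (subst pos_divide_le_eq[OF eta])
    show "2*\<delta> \<le> \<theta>*\<eta>" using d1(1) by linarith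
  qed
  have r3: "2 * qK K + K * \<delta>\<^sup>2 \<le> 3*\<theta>"
  proof -
    have "\<delta>\<^sup>2 \<le> \<delta>" using d d1 by (simp add: power2_eq_square mult_le_cancel_right1)
    then have "K * \<delta>\<^sup>2 \<le> K * \<delta>" using K by simp
    also have "\<dots> \<le> K * (\<theta>/K)" using K d1 by (intro mult_left_mono) auto
    also have "\<dots> = \<theta>" using K by simp
    finally show ?thesis using qK1 by simp
  qed
  define g where "g n = emeasure (\<Omega> n) (space (\<Omega> n) - G n \<delta>)" for n
  define h where "h n = ennreal (exp (-2*(real n*\<eta>)\<^sup>2/(real n*K\<^sup>2)))" for n
  have g0: "g \<longlonglongrightarrow> 0"
  proof -
    have "g n = emeasure (\<Omega> n) {\<omega> \<in> space (\<Omega> n).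
             (\<integral>\<^sup>+ x. ennreal ((Wbar n \<omega> x - w x)\<^sup>2) \<partial>(distr P Mx fst)) > ennreal (\<delta>\<^sup>2)}" for n
    proof -
      have "space (\<Omega> n) - G n \<delta> = {\<omega> \<in> space (\<Omega> n).
             (\<integral>\<^sup>+ x. ennreal ((Wbar n \<omega> x - w x)\<^sup>2) \<partial>(distr P Mx fst)) > ennreal (\<delta>\<^sup>2)}"
        by (auto simp: G_def Phi_distr not_le)
      then show ?thesis by (simp add: g_def)
    qed
    then have geq: "g = (\<lambda>n. emeasure (\<Omega> n) {\<omega> \<in> space (\<Omega> n).
             (\<integral>\<^sup>+ x. ennreal ((Wbar n \<omega> x - w x)\<^sup>2) \<partial>(distr P Mx fst)) > ennreal (\<delta>\<^sup>2)})"
      by (intro ext)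
    show ?thesis unfolding geq by (rule cons[OF d])
  qed
  have h0: "h \<longlonglongrightarrow> 0"
    unfolding h_def using tendsto_ennrealI[OF exp_lim[OF eta K]] by simp
  define z where "z n = h n + h n + g n + g n" for n
  have z0: "z \<longlonglongrightarrow> 0" unfolding z_def using tendsto_add[OF tendsto_add[OF tendsto_add[OF h0 h0] g0] g0] by simp
  define sl where "sl = \<alpha> + e - (Fint t1 + 5*\<theta>)"
  have sl: "sl > 0" using t1b e by (simp add: sl_def \<theta>_def)
  have ev1: "eventually (\<lambda>n. z n < ennreal sl) sequentially"
    using z0 sl by (intro order_tendstoD(2)) auto
  have ev2: "eventually (\<lambda>n. n > 0 \<and> K + 1 \<le> real n * \<eta>) sequentially"
    using eventually_ge_at_top[of "Suc (nat \<lceil>(K+1)/\<eta>\<rceil>)"]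
  proof eventually_elim
    case (elim n)
    have "(K+1)/\<eta> \<le> real n" using elim by linarith
    then show ?case using elim eta by (simp add: divide_le_eq mult.commute)
  qed
  show ?thesis using ev1 ev2
  proof eventually_elim
    case (elim n)
    then have n: "n > 0" and nK: "K + 1 \<le> real n * \<eta>" by auto
    have F0: "Fint t1 \<ge> 0" using t1a \<alpha>_range by simp
    note mb = main_bound[OF n K eta d nK cu]
    have "ennreal (Fint t1) + h n + h n + ennreal (qK K / \<eta>) + (g n + ennreal (2*\<delta>/\<eta>)) + (g n + ennreal (2 * qK K + K * \<delta>\<^sup>2))
        \<le> ennreal (Fint t1) + h n + h n + ennreal \<theta> + (g n + ennreal \<theta>) + (g n + ennreal (3*\<theta>))"
      using r1 r2 r3 by (intro add_mono order_refl ennreal_leI) auto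
    also have "\<dots> = (ennreal (Fint t1) + ennreal \<theta> + ennreal \<theta> + ennreal (3*\<theta>)) + z n"
      by (simp add: z_def ac_simps)
    also have "ennreal (Fint t1) + ennreal \<theta> + ennreal \<theta> + ennreal (3*\<theta>) = ennreal (Fint t1 + 5*\<theta>)"
      using F0 th by (simp add: ennreal_plus[symmetric] del: ennreal_plus)
    also have "ennreal (Fint t1 + 5*\<theta>) + z n \<le> ennreal (Fint t1 + 5*\<theta>) + ennreal sl"
      using elim by (intro add_left_mono) auto
    also have "\<dots> = ennreal (\<alpha> + e)" using F0 th sl by (simp add: sl_def ennreal_plus[symmetric] del: ennreal_plus)
    finally have "ennreal (Fint t1) + h n + h n + ennreal (qK K / \<eta>) + (g n + ennreal (2*\<delta>/\<eta>)) + (g n + ennreal (2 * qK K + K * \<delta>\<^sup>2))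
        \<le> ennreal (\<alpha> + e)" .
    then show ?case using mb unfolding g_def h_def by (rule order_trans[rotated])
  qed
qed

end

theorem theorem6p3:
  fixes Mx :: "'x measure" and My :: "'y measure"
    and P Q :: "('x \<times> 'y) measure"
    and w :: "'x \<Rightarrow> real" and s :: "'x \<Rightarrow> real" and Lf :: "'x \<times> 'y \<Rightarrow> real"
    and \<Omega> :: "nat \<Rightarrow> 'o measure" and Wbar :: "nat \<Rightarrow> 'o \<Rightarrow> 'x \<Rightarrow> real"
    and \<alpha> :: real
  assumes P_prob: "prob_space P"
    and P_sets: "sets P = sets (Mx \<Otimes>\<^sub>M My)"
    and w_meas: "w \<in> borel_measurable Mx"
    and w_pos: "\<And>x. x \<in> space Mx \<Longrightarrow> w x > 0"
    and Q_def: "Q = density P (\<lambda>z. ennreal (w (fst z)))"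
    and Q_prob: "prob_space Q"
    and Lf_meas: "Lf \<in> borel_measurable (Mx \<Otimes>\<^sub>M My)"
    and Lf_range: "\<And>z. z \<in> space (Mx \<Otimes>\<^sub>M My) \<Longrightarrow> Lf z \<in> {0..1}"
    and s_meas: "s \<in> borel_measurable Mx"
    and s_range: "\<And>x. x \<in> space Mx \<Longrightarrow> s x \<in> {0..1}"
    and \<Omega>_prob: "\<And>n. prob_space (\<Omega> n)"
    and Wbar_meas: "\<And>n. (\<lambda>(\<omega>, x). Wbar n \<omega> x) \<in> borel_measurable (\<Omega> n \<Otimes>\<^sub>M Mx)"
    and Wbar_nonneg: "\<And>n \<omega> x. \<omega> \<in> space (\<Omega> n) \<Longrightarrow> x \<in> space Mx \<Longrightarrow> Wbar n \<omega> x \<ge> 0"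
    and Wbar_consistent:
      "\<And>\<epsilon>. \<epsilon> > 0 \<Longrightarrow>
         (\<lambda>n. emeasure (\<Omega> n) {\<omega> \<in> space (\<Omega> n).
             (\<integral>\<^sup>+ x. ennreal ((Wbar n \<omega> x - w x)\<^sup>2) \<partial>(distr P Mx fst)) > ennreal (\<epsilon>\<^sup>2)})
         \<longlonglongrightarrow> 0"
    and \<alpha>_range: "0 < \<alpha>" "\<alpha> < 1"
    and F_def: "F = (\<lambda>t::real.
         (\<integral>z. w (fst z) * real_cond_exp P (vimage_algebra (space P) fst Mx) Lf z
                * (if s (fst z) \<le> t then 1 else 0) \<partial>P) / (\<integral>z. w (fst z) \<partial>P))"
    and bdd: "bdd_above {t. F t \<le> \<alpha>}"
    and tstar_def: "tstar = Sup {t. F t \<le> \<alpha>}"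
    and F_cont: "isCont F tstar"
    and F_strict: "\<And>t. t < tstar \<Longrightarrow> F t < F tstar" "\<And>t. tstar < t \<Longrightarrow> F tstar < F t"
    and MDR_def: "MDR = (\<lambda>n.
         \<integral>\<^sup>+ (\<omega>, Z). ennreal (Lf (Z n)
            * (if evalue n (\<lambda>i. Wbar n \<omega> (fst (Z i))) (\<lambda>i. Lf (Z i)) (\<lambda>i. s (fst (Z i))) \<alpha>
                  \<ge> ereal (1 / \<alpha>) then 1 else 0))
         \<partial>(\<Omega> n \<Otimes>\<^sub>M (\<Pi>\<^sub>M i\<in>{..n}. if i = n then Q else P)))"
  shows "limsup MDR \<le> ennreal \<alpha>"
proof -
  interpret S: S63 Mx My P Q w s Lf \<Omega> Wbar \<alpha>
    by (rule S63.intro[OF P_prob P_sets w_meas w_pos Q_def Q_prob Lf_meas Lf_range s_meas s_range \<Omega>_prob Wbar_meas Wbar_nonneg \<alpha>_range])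
  have FF: "F t = S.Fint t" for t unfolding F_def using S.F_eq by simp
  have MDR_eq: "MDR n = (\<integral>\<^sup>+(\<omega>,Z). ennreal (Lf (Z n) * (if evalue n (\<lambda>i. Wbar n \<omega> (fst (Z i))) (\<lambda>i. Lf (Z i)) (\<lambda>i. s (fst (Z i))) \<alpha> \<ge> ereal (1/\<alpha>) then 1 else 0)) \<partial>(\<Omega> n \<Otimes>\<^sub>M PiM {..n} (S.Mf n)))" for n
    unfolding MDR_def S.Mf_def by (rule refl)
  let ?A = "{t. F t \<le> \<alpha>}"
  have F0: "F (-1) = 0"
  proof -
    have "S.Fint (-1) = (\<integral>z. 0 \<partial>P)" unfolding S.Fint_def
    proof (rule Bochner_Integration.integral_cong[OF refl])
      fix z assume z: "z \<in> space P"
      have "s (fst z) \<ge> 0" using s_range S.fst_space[OF z] by auto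
      then show "w (fst z) * Lf z * (if s (fst z) \<le> -1 then 1 else 0) = 0" by simp
    qed
    then show ?thesis using FF by simp
  qed
  have Ane: "?A \<noteq> {}" using F0 \<alpha>_range by (auto intro!: exI[of _ "-1"])
  have cont: "\<exists>d>0. \<forall>t. t \<noteq> tstar \<and> \<bar>t - tstar\<bar> < d \<longrightarrow> \<bar>F t - F tstar\<bar> < r" if r: "r > 0" for r
    using F_cont r unfolding isCont_def LIM_eq by (auto simp: real_norm_def)
  have Fts: "F tstar \<le> \<alpha>"
  proof (rule ccontr)
    assume "\<not> F tstar \<le> \<alpha>"
    then have r: "F tstar - \<alpha> > 0" by simp
    obtain d where d: "d > 0" and dd: "\<And>t. t \<noteq> tstar \<and> \<bar>t - tstar\<bar> < d \<Longrightarrow> \<bar>F t - F tstar\<bar> < F tstar - \<alpha>"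
      using cont[OF r] by blast
    have "tstar - d < Sup ?A" using d tstar_def by simp
    then obtain x where xA: "x \<in> ?A" and x: "tstar - d < x" using less_cSupD[OF Ane] by blast
    have "x \<le> tstar" unfolding tstar_def by (rule cSup_upper[OF xA bdd])
    show False
    proof (cases "x = tstar")
      case True then show False using xA \<open>\<not> F tstar \<le> \<alpha>\<close> by simp
    next
      case False
      then have "\<bar>F x - F tstar\<bar> < F tstar - \<alpha>" using dd[of x] x \<open>x \<le> tstar\<close> by auto
      then show False using xA by auto
    qed
  qed
  have step: "limsup MDR \<le> ennreal \<alpha> + ennreal e" if e: "e > 0" for e
  proof -
    obtain d where d: "d > 0" and dd: "\<And>t. t \<noteq> tstar \<and> \<bar>t - tstar\<bar> < d \<Longrightarrow> \<bar>F t - F tstar\<bar> < e/2"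
      using cont[of "e/2"] e by auto
    define t1 where "t1 = tstar + d/2"
    have "\<bar>F t1 - F tstar\<bar> < e/2" using dd[of t1] d by (simp add: t1_def)
    then have t1b: "F t1 < \<alpha> + e/2" using Fts by linarith
    have t1a: "F t1 > \<alpha>"
    proof (rule ccontr)
      assume "\<not> F t1 > \<alpha>"
      then have "t1 \<in> ?A" by simp
      then have "t1 \<le> tstar" unfolding tstar_def by (rule cSup_upper[OF _ bdd])
      then show False using d by (simp add: t1_def)
    qed
    have ev: "eventually (\<lambda>n. MDR n \<le> ennreal (\<alpha> + e)) sequentially"
      using S.eventually_bound[OF Wbar_consistent e, of t1] t1a t1b unfolding FF MDR_eq by simp
    have "limsup MDR \<le> ennreal (\<alpha> + e)" by (rule Limsup_bounded[OF ev])
    also have "\<dots> = ennreal \<alpha> + ennreal e" using \<alpha>_range e by (simp add: ennreal_plus)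
    finally show ?thesis .
  qed
  show ?thesis by (rule ennreal_le_epsilon) (rule step)
qed

end
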